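(* Let $n>2$. Then ${\rm Sp}(2n,2)$ is generated by $\hat x_{1n}(1)\hat z_1(1)=(I+E_{1n})(I+E_{n+1,2n})(I+E_{1,2n})$ and the $2n\times 2n$ matrix $\hat w$ over ${\rm GF}(2)$ whose nonzero entries are $1$ in positions $(i+1,i)$ for $1\le i\le n-1$, $(2n,n)$, $(j-1,j)$ for $n+2\le j\le 2n$, and $(1,n+1)$.
   Context: ${\rm Sp}(2n,2)$ is the group of $2n\times 2n$ matrices $X$ over ${\rm GF}(2)$ with $X^tJX=J$, where $J$ is the $2n\times 2n$ antidiagonal matrix of ones. $E_{ij}$ is the matrix unit with $1$ in position $(i,j)$. With $i'=2n+1-i$: $\hat x_{ij}(\alpha)=(I+\alpha E_{ij})(I-\alpha E_{j'i'})$ and $\hat z_i(\alpha)=I+\alpha E_{ii'}$; $\hat w$ is the permutation matrix of the $2n$-cycle $(1,2,\dots,n,1',\dots,n')$. *)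

theory Defs
  imports "HOL-Library.Z2" "Jordan_Normal_Form.Matrix"
begin

(* Matrices over GF(2) = type bit; Jordan_Normal_Form matrices are 0-indexed,
   so the paper's 1-based position (i,j) is entry (i-1,j-1). *)

definition Jmat :: "nat \<Rightarrow> bit mat" where
  "Jmat n = mat (2*n) (2*n) (\<lambda>(r,c). if r + c = 2*n - 1 then 1 else 0)"

definition Sp2 :: "nat \<Rightarrow> bit mat set" where
  "Sp2 n = {X. X \<in> carrier_mat (2*n) (2*n) \<and> transpose_mat X * Jmat n * X = Jmat n}"

definition Eunit :: "nat \<Rightarrow> nat \<Rightarrow> nat \<Rightarrow> bit mat" where
  "Eunit d i j = mat d d (\<lambda>(r,c). if r + 1 = i \<and> c + 1 = j then 1 else 0)"

inductive_set gen_grp :: "nat \<Rightarrow> bit mat set \<Rightarrow> bit mat set" for d S where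
  one: "1\<^sub>m d \<in> gen_grp d S"
| base: "s \<in> S \<Longrightarrow> s \<in> gen_grp d S"
| mult: "a \<in> gen_grp d S \<Longrightarrow> b \<in> gen_grp d S \<Longrightarrow> a * b \<in> gen_grp d S"
| inv: "a \<in> gen_grp d S \<Longrightarrow> b \<in> carrier_mat d d \<Longrightarrow> a * b = 1\<^sub>m d \<Longrightarrow> b \<in> gen_grp d S"

definition gen_a :: "nat \<Rightarrow> bit mat" where
  "gen_a n = (1\<^sub>m (2*n) + Eunit (2*n) 1 n) * (1\<^sub>m (2*n) + Eunit (2*n) (n+1) (2*n))
             * (1\<^sub>m (2*n) + Eunit (2*n) 1 (2*n))"

definition w_hat :: "nat \<Rightarrow> bit mat" where
  "w_hat n = mat (2*n) (2*n) (\<lambda>(r,c). let i = r + 1; j = c + 1 in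
     if (1 \<le> j \<and> j \<le> n - 1 \<and> i = j + 1) \<or> (i = 2*n \<and> j = n)
        \<or> (n + 2 \<le> j \<and> j \<le> 2*n \<and> i = j - 1) \<or> (i = 1 \<and> j = n + 1)
     then 1 else 0)"

end

theory Submission
  imports Defs "Jordan_Normal_Form.Determinant"
begin


declare add_bit_eq_xor[simp del] mult_bit_eq_and[simp del]

lemma bit_add_self[simp]: "(x::bit) + x = 0" by (cases x) simp_all
lemma bit_cases_all: "(P (0::bit)) \<Longrightarrow> P 1 \<Longrightarrow> P x" by (cases x) auto

definition Bf :: "nat \<Rightarrow> bit vec \<Rightarrow> bit vec \<Rightarrow> bit" where
  "Bf d x y = (\<Sum>i<d. x$i * y$(d-1-i))"

definition Tr :: "nat \<Rightarrow> bit vec \<Rightarrow> bit mat" where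
  "Tr d v = mat d d (\<lambda>(r,c). (if r = c then 1 else 0) + v$r * v$(d-1-c))"

lemma Tr_carrier[simp]: "Tr d v \<in> carrier_mat d d" by (simp add: Tr_def)

lemma Tr_dims[simp]: "dim_row (Tr d v) = d" "dim_col (Tr d v) = d" by (simp_all add: Tr_def)
lemma J_dims[simp]: "dim_row (Jmat n) = 2*n" "dim_col (Jmat n) = 2*n" by (simp_all add: Jmat_def)

lemma mv_sq[simp]: "A \<in> carrier_mat d d \<Longrightarrow> x \<in> carrier_vec d \<Longrightarrow> A *\<^sub>v x \<in> carrier_vec d" by simp
lemma mm_sq[simp]: "A \<in> carrier_mat d d \<Longrightarrow> B \<in> carrier_mat d d \<Longrightarrow> A * B \<in> carrier_mat d d" by simp
lemma assoc_sq[simp]: "A \<in> carrier_mat d d \<Longrightarrow> B \<in> carrier_mat d d \<Longrightarrow> x \<in> carrier_vec d \<Longrightarrow>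
   (A * B) *\<^sub>v x = A *\<^sub>v (B *\<^sub>v x)" by (rule assoc_mult_mat_vec)
lemma assoc_mm_sq: "A \<in> carrier_mat d d \<Longrightarrow> B \<in> carrier_mat d d \<Longrightarrow> C \<in> carrier_mat d d \<Longrightarrow>
   (A * B) * C = A * (B * C)" by (rule assoc_mult_mat)

lemma sum_rev_lt: "(\<Sum>i<(d::nat). f (d-1-i)) = (\<Sum>i<d. f i)"
proof -
  have "(\<Sum>i<d. f (d-1-i)) = (\<Sum>i\<in>{0..<d}. f (d-1-i))" by (simp add: lessThan_atLeast0)
  also have "\<dots> = (\<Sum>i\<in>{0..<d}. f i)"
    by (rule sum.reindex_bij_witness[where i="\<lambda>i. d-1-i" and j="\<lambda>i. d-1-i"]) auto
  finally show ?thesis by (simp add: lessThan_atLeast0)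
qed

lemma Bf_sym: "x \<in> carrier_vec d \<Longrightarrow> y \<in> carrier_vec d \<Longrightarrow> Bf d x y = Bf d y x"
proof -
  have "Bf d x y = (\<Sum>i<d. x$(d-1-(d-1-i)) * y$(d-1-i))"
    unfolding Bf_def by (rule sum.cong) auto
  also have "\<dots> = (\<Sum>i<d. x$(d-1-i) * y$i)"
    using sum_rev_lt[of "\<lambda>i. x$(d-1-i) * y$i" d] by simp
  finally show "Bf d x y = Bf d y x" unfolding Bf_def by (simp add: mult.commute)
qed

lemma Tr_act: assumes "v \<in> carrier_vec d" "x \<in> carrier_vec d"
  shows "Tr d v *\<^sub>v x = x + Bf d x v \<cdot>\<^sub>v v"
proof (rule eq_vecI)
  show "dim_vec (Tr d v *\<^sub>v x) = dim_vec (x + Bf d x v \<cdot>\<^sub>v v)" using assms by (simp add: Tr_def)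
  fix i assume "i < dim_vec (x + Bf d x v \<cdot>\<^sub>v v)"
  hence i: "i < d" using assms by simp
  have "(Tr d v *\<^sub>v x) $ i = (\<Sum>c<d. ((if i = c then 1 else 0) + v$i * v$(d-1-c)) * x$c)"
    using i assms by (simp add: Tr_def scalar_prod_def lessThan_atLeast0)
  also have "\<dots> = (\<Sum>c<d. (if i = c then x$c else 0) + v$i * (x$c * v$(d-1-c)))"
    by (rule sum.cong) (auto simp: distrib_right distrib_left ac_simps)
  also have "\<dots> = (\<Sum>c<d. (if i = c then x$c else 0)) + v$i * (\<Sum>c<d. x$c * v$(d-1-c))"
    by (simp add: sum.distrib sum_distrib_left)
  also have "\<dots> = x$i + v$i * Bf d x v" using i by (simp add: Bf_def)
  finally show "(Tr d v *\<^sub>v x) $ i = (x + Bf d x v \<cdot>\<^sub>v v) $ i" using i assms by (simp add: ac_simps)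
qed

lemma bit_eq_tac: "(a::bit) = b \<longleftrightarrow> (even a \<longleftrightarrow> even b)" by (rule Z2.bit_eq_iff)

lemma mat_eq_vec: fixes A B :: "bit mat" assumes "A \<in> carrier_mat d d" "B \<in> carrier_mat d d"
  "\<And>x. x \<in> carrier_vec d \<Longrightarrow> A *\<^sub>v x = B *\<^sub>v x"
  shows "A = B"
proof (rule eq_matI)
  fix i j assume "i < dim_row B" "j < dim_col B"
  hence ij: "i < d" "j < d" using assms by auto
  have dA: "dim_row A = d" "dim_col A = d" "dim_row B = d" "dim_col B = d" using assms by auto
  have "A $$ (i,j) = (A *\<^sub>v unit_vec d j) $ i" using ij dA by (simp add: scalar_prod_right_unit)
  also have "\<dots> = (B *\<^sub>v unit_vec d j) $ i" using assms(3)[of "unit_vec d j"] by simp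
  also have "\<dots> = B $$ (i,j)" using ij dA by (simp add: scalar_prod_right_unit)
  finally show "A $$ (i,j) = B $$ (i,j)" .
qed (insert assms, auto)

lemma Bf_add1: "x \<in> carrier_vec d \<Longrightarrow> y \<in> carrier_vec d \<Longrightarrow> Bf d (x + y) z = Bf d x z + Bf d y z"
  unfolding Bf_def by (simp add: distrib_right sum.distrib)
lemma Bf_add2: "y \<in> carrier_vec d \<Longrightarrow> z \<in> carrier_vec d \<Longrightarrow> Bf d x (y + z) = Bf d x y + Bf d x z"
  unfolding Bf_def by (simp add: distrib_left sum.distrib)
lemma Bf_smult1: "x \<in> carrier_vec d \<Longrightarrow> Bf d (c \<cdot>\<^sub>v x) z = c * Bf d x z"
  unfolding Bf_def by (simp add: sum_distrib_left ac_simps)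
lemma Bf_smult2: "y \<in> carrier_vec d \<Longrightarrow> Bf d x (c \<cdot>\<^sub>v y) = c * Bf d x y"
  unfolding Bf_def by (simp add: sum_distrib_left ac_simps)

lemma Bf_unit1: "i < d \<Longrightarrow> Bf d (unit_vec d i) y = y $ (d-1-i)"
proof -
  assume i: "i < d"
  have "Bf d (unit_vec d i) y = (\<Sum>k<d. if k = i then y $ (d-1-k) else 0)"
    unfolding Bf_def using i by (intro sum.cong) auto
  thus ?thesis using i by simp
qed

lemma Bf_unit2: "x \<in> carrier_vec d \<Longrightarrow> j < d \<Longrightarrow> Bf d x (unit_vec d j) = x $ (d-1-j)"
  using Bf_sym[of x d "unit_vec d j"] Bf_unit1[of j d x] by simp

lemma sum_split_add: "(\<Sum>i<n+m. (f::nat\<Rightarrow>'a::comm_monoid_add) i) = (\<Sum>i<n. f i) + (\<Sum>i<m. f (n+i))"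
  by (induction m) (simp_all add: ac_simps)

lemma Bf_self: assumes "x \<in> carrier_vec (2*n)" shows "Bf (2*n) x x = 0"
proof -
  let ?f = "\<lambda>i. x$i * x$(2*n-1-i)"
  have f: "\<And>i. i < 2*n \<Longrightarrow> ?f (2*n-1-i) = ?f i" by (simp add: mult.commute)
  have "Bf (2*n) x x = (\<Sum>i<n+n. ?f i)" unfolding Bf_def by (simp add: mult_2)
  also have "\<dots> = (\<Sum>i<n. ?f i) + (\<Sum>i<n. ?f (n+i))"
    by (rule sum_split_add)
  also have "(\<Sum>i<n. ?f (n+i)) = (\<Sum>i<n. ?f (n-1-i))"
    by (rule sum.cong) (auto simp: mult.commute)
  also have "\<dots> = (\<Sum>i<n. ?f i)" by (rule sum_rev_lt)
  finally show ?thesis by simp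
qed

definition SpB :: "nat \<Rightarrow> bit mat \<Rightarrow> bool" where
  "SpB d X \<longleftrightarrow> X \<in> carrier_mat d d \<and>
     (\<forall>x\<in>carrier_vec d. \<forall>y\<in>carrier_vec d. Bf d (X *\<^sub>v x) (X *\<^sub>v y) = Bf d x y)"

lemma SpB_mult: "SpB d A \<Longrightarrow> SpB d B \<Longrightarrow> SpB d (A * B)"
  unfolding SpB_def by auto

lemma SpB_one: "SpB d (1\<^sub>m d)" unfolding SpB_def by auto

lemma Bf_carrier_simps:
  "x \<in> carrier_vec d \<Longrightarrow> v \<in> carrier_vec d \<Longrightarrow> Bf d (x + c \<cdot>\<^sub>v v) y = Bf d x y + c * Bf d v y"
  "y \<in> carrier_vec d \<Longrightarrow> v \<in> carrier_vec d \<Longrightarrow> Bf d x (y + c \<cdot>\<^sub>v v) = Bf d x y + c * Bf d x v"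
  by (simp_all add: Bf_add1 Bf_add2 Bf_smult1 Bf_smult2)

lemma Tr_SpB: assumes u: "u \<in> carrier_vec (2*n)" shows "SpB (2*n) (Tr (2*n) u)"
  unfolding SpB_def
proof (intro conjI ballI)
  fix x y :: "bit vec" assume x: "x \<in> carrier_vec (2*n)" and y: "y \<in> carrier_vec (2*n)"
  have s: "Bf (2*n) u u = 0" by (rule Bf_self[OF u])
  have "Bf (2*n) (Tr (2*n) u *\<^sub>v x) (Tr (2*n) u *\<^sub>v y) =
    Bf (2*n) x y + Bf (2*n) y u * Bf (2*n) x u + Bf (2*n) x u * (Bf (2*n) u y + Bf (2*n) y u * Bf (2*n) u u)"
    using x y u by (simp add: Tr_act Bf_carrier_simps algebra_simps)
  also have "\<dots> = Bf (2*n) x y" using Bf_sym[OF u y] s by (simp add: algebra_simps)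
  finally show "Bf (2*n) (Tr (2*n) u *\<^sub>v x) (Tr (2*n) u *\<^sub>v y) = Bf (2*n) x y" .
qed simp

lemma Tr_sq: assumes u: "u \<in> carrier_vec (2*n)" shows "Tr (2*n) u * Tr (2*n) u = 1\<^sub>m (2*n)"
proof (rule mat_eq_vec[where d="2*n"])
  fix x :: "bit vec" assume x: "x \<in> carrier_vec (2*n)"
  have s: "Bf (2*n) u u = 0" by (rule Bf_self[OF u])
  have "(Tr (2*n) u * Tr (2*n) u) *\<^sub>v x = x + Bf (2*n) x u \<cdot>\<^sub>v u + (Bf (2*n) x u + Bf (2*n) x u * Bf (2*n) u u) \<cdot>\<^sub>v u"
    using x u by (simp add: Tr_act Bf_carrier_simps assoc_sq[of _ "2*n"])
  also have "\<dots> = x" using s x u by (intro eq_vecI) (auto simp: algebra_simps)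
  finally show "(Tr (2*n) u * Tr (2*n) u) *\<^sub>v x = 1\<^sub>m (2*n) *\<^sub>v x" using x by simp
qed auto

lemma Tr_conj: assumes g: "SpB d g" and u: "u \<in> carrier_vec d"
  shows "g * Tr d u = Tr d (g *\<^sub>v u) * g"
proof (rule mat_eq_vec[where d=d])
  fix x :: "bit vec" assume x: "x \<in> carrier_vec d"
  have gc: "g \<in> carrier_mat d d" using g unfolding SpB_def by auto
  have gb: "Bf d (g *\<^sub>v x) (g *\<^sub>v u) = Bf d x u" using g x u unfolding SpB_def by auto
  show "(g * Tr d u) *\<^sub>v x = (Tr d (g *\<^sub>v u) * g) *\<^sub>v x"
    using gc x u gb by (simp add: Tr_act mult_add_distrib_mat_vec mult_mat_vec assoc_sq[of _ d])
qed (insert g, auto simp: SpB_def)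

lemma J_carrier[simp]: "Jmat n \<in> carrier_mat (2*n) (2*n)" by (simp add: Jmat_def)

lemma J_act: assumes y: "y \<in> carrier_vec (2*n)"
  shows "Jmat n *\<^sub>v y = vec (2*n) (\<lambda>r. y $ (2*n-1-r))"
proof (rule eq_vecI)
  fix r assume "r < dim_vec (vec (2*n) (\<lambda>r. y $ (2*n-1-r)))"
  hence r: "r < 2*n" by simp
  have "(Jmat n *\<^sub>v y) $ r = (\<Sum>c\<in>{0..<2*n}. (if r + c = 2*n-1 then 1 else 0) * y $ c)"
    using r y by (simp add: Jmat_def scalar_prod_def)
  also have "\<dots> = (\<Sum>c\<in>{0..<2*n}. if c = 2*n-1-r then y $ c else 0)"
    using r by (intro sum.cong) auto
  also have "\<dots> = y $ (2*n-1-r)" using r by simp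
  finally show "(Jmat n *\<^sub>v y) $ r = vec (2*n) (\<lambda>r. y $ (2*n-1-r)) $ r" using r by simp
qed (insert y, simp add: Jmat_def)

lemma Bf_J: assumes "x \<in> carrier_vec (2*n)" "y \<in> carrier_vec (2*n)"
  shows "x \<bullet> (Jmat n *\<^sub>v y) = Bf (2*n) x y"
  using assms by (simp add: J_act scalar_prod_def Bf_def lessThan_atLeast0)

lemma JJ: "Jmat n * Jmat n = 1\<^sub>m (2*n)"
proof (rule mat_eq_vec[where d="2*n"])
  fix x :: "bit vec" assume x: "x \<in> carrier_vec (2*n)"
  have "Jmat n *\<^sub>v x \<in> carrier_vec (2*n)" using x by simp
  thus "(Jmat n * Jmat n) *\<^sub>v x = 1\<^sub>m (2*n) *\<^sub>v x" using x
    by (simp add: J_act assoc_sq[of _ "2*n"]) (intro eq_vecI, auto)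
qed auto

lemma Sp2_iff: "X \<in> Sp2 n \<longleftrightarrow> SpB (2*n) X"
proof
  assume X: "X \<in> Sp2 n"
  hence c: "X \<in> carrier_mat (2*n) (2*n)" and e: "transpose_mat X * Jmat n * X = Jmat n"
    unfolding Sp2_def by auto
  show "SpB (2*n) X" unfolding SpB_def
  proof (intro conjI ballI c)
    fix x y :: "bit vec" assume x: "x \<in> carrier_vec (2*n)" and y: "y \<in> carrier_vec (2*n)"
    have "Bf (2*n) (X *\<^sub>v x) (X *\<^sub>v y) = (X *\<^sub>v x) \<bullet> (Jmat n *\<^sub>v (X *\<^sub>v y))"
      using x y c by (simp add: Bf_J)
    also have "\<dots> = (Jmat n *\<^sub>v (X *\<^sub>v y)) \<bullet> (X *\<^sub>v x)"
      using x y c by (intro comm_scalar_prod[where n="2*n"]) auto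
    also have "\<dots> = (transpose_mat X *\<^sub>v (Jmat n *\<^sub>v (X *\<^sub>v y))) \<bullet> x"
      using x y c by (intro transpose_vec_mult_scalar[symmetric]) auto
    also have "transpose_mat X *\<^sub>v (Jmat n *\<^sub>v (X *\<^sub>v y)) = (transpose_mat X * Jmat n * X) *\<^sub>v y"
      using c y by (simp add: assoc_mult_mat_vec[of _ "2*n" "2*n" _ "2*n"])
    also have "\<dots> = Jmat n *\<^sub>v y" using e by simp
    also have "(Jmat n *\<^sub>v y) \<bullet> x = x \<bullet> (Jmat n *\<^sub>v y)"
      using x y by (intro comm_scalar_prod[where n="2*n"]) auto
    also have "\<dots> = Bf (2*n) x y" using x y by (simp add: Bf_J)
    finally show "Bf (2*n) (X *\<^sub>v x) (X *\<^sub>v y) = Bf (2*n) x y" .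
  qed
next
  assume S: "SpB (2*n) X"
  hence c: "X \<in> carrier_mat (2*n) (2*n)" unfolding SpB_def by auto
  have "transpose_mat X * Jmat n * X = Jmat n"
  proof (rule mat_eq_vec[where d="2*n"])
    fix y :: "bit vec" assume y: "y \<in> carrier_vec (2*n)"
    show "(transpose_mat X * Jmat n * X) *\<^sub>v y = Jmat n *\<^sub>v y"
    proof (rule eq_vecI)
      fix i assume "i < dim_vec (Jmat n *\<^sub>v y)"
      hence i: "i < 2*n" by simp
      let ?e = "unit_vec (2*n) i :: bit vec"
      have "((transpose_mat X * Jmat n * X) *\<^sub>v y) $ i = ?e \<bullet> (transpose_mat X *\<^sub>v (Jmat n *\<^sub>v (X *\<^sub>v y)))"
        using c y i by (simp add: assoc_mult_mat_vec[of _ "2*n" "2*n" _ "2*n"])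
      also have "\<dots> = (transpose_mat (transpose_mat X) *\<^sub>v ?e) \<bullet> (Jmat n *\<^sub>v (X *\<^sub>v y))"
        using c y by (intro transpose_vec_mult_scalar[symmetric]) auto
      also have "\<dots> = Bf (2*n) (X *\<^sub>v ?e) (X *\<^sub>v y)" using c y by (simp add: Bf_J)
      also have "\<dots> = Bf (2*n) ?e y" using S y unfolding SpB_def by auto
      also have "\<dots> = ?e \<bullet> (Jmat n *\<^sub>v y)" using y by (simp add: Bf_J)
      also have "\<dots> = (Jmat n *\<^sub>v y) $ i" using y i by simp
      finally show "((transpose_mat X * Jmat n * X) *\<^sub>v y) $ i = (Jmat n *\<^sub>v y) $ i" .
    qed (insert c, auto)
  qed (insert c, auto)
  thus "X \<in> Sp2 n" using c unfolding Sp2_def by auto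
qed

definition Spinv :: "nat \<Rightarrow> bit mat \<Rightarrow> bit mat" where
  "Spinv n X = Jmat n * transpose_mat X * Jmat n"

lemma Spinv_carrier: "X \<in> carrier_mat (2*n) (2*n) \<Longrightarrow> Spinv n X \<in> carrier_mat (2*n) (2*n)"
  by (simp add: Spinv_def)

lemma Spinv_right: assumes "SpB (2*n) X" shows "X * Spinv n X = 1\<^sub>m (2*n)"
proof -
  have c: "X \<in> carrier_mat (2*n) (2*n)" using assms unfolding SpB_def by auto
  have e: "transpose_mat X * Jmat n * X = Jmat n" using assms Sp2_iff[of X n] unfolding Sp2_def by auto
  have "Spinv n X * X = Jmat n * (transpose_mat X * Jmat n * X)"
    unfolding Spinv_def using c by (simp add: assoc_mult_mat[of _ "2*n" "2*n" _ "2*n" _ "2*n"])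
  also have "\<dots> = 1\<^sub>m (2*n)" using e JJ by simp
  finally show ?thesis using c Spinv_carrier[OF c] mat_mult_left_right_inverse by blast
qed


lemma Eunit_carrier[simp]: "Eunit d i j \<in> carrier_mat d d" by (simp add: Eunit_def)
lemma Eunit_dims[simp]: "dim_row (Eunit d i j) = d" "dim_col (Eunit d i j) = d" by (simp_all add: Eunit_def)

lemma IE_act: assumes "1 \<le> i" "i \<le> d" "1 \<le> j" "j \<le> d" "x \<in> carrier_vec d"
  shows "(1\<^sub>m d + Eunit d i j) *\<^sub>v x = x + x $ (j-1) \<cdot>\<^sub>v unit_vec d (i-1)"
proof (rule eq_vecI)
  fix r assume "r < dim_vec (x + x $ (j-1) \<cdot>\<^sub>v unit_vec d (i-1))"
  hence r: "r < d" by simp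
  have "((1\<^sub>m d + Eunit d i j) *\<^sub>v x) $ r = (\<Sum>c\<in>{0..<d}. ((if c = r then 1 else 0) + (if r + 1 = i \<and> c + 1 = j then 1 else 0)) * x $ c)"
    using r assms by (simp add: Eunit_def scalar_prod_def)
  also have "\<dots> = (\<Sum>c\<in>{0..<d}. (if c = r then x $ c else 0) + (if c = j - 1 then (if r + 1 = i then x $ c else 0) else 0))"
    using assms by (intro sum.cong) (auto simp: distrib_right)
  also have "\<dots> = x $ r + (if r + 1 = i then x $ (j-1) else 0)"
    using r assms by (simp add: sum.distrib) (use assms in linarith)
  finally show "((1\<^sub>m d + Eunit d i j) *\<^sub>v x) $ r = (x + x $ (j-1) \<cdot>\<^sub>v unit_vec d (i-1)) $ r"
    using r assms by auto
qed (insert assms, auto)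

definition uv :: "nat \<Rightarrow> nat \<Rightarrow> bit vec" where "uv d i = unit_vec d i"

lemma uv_carrier[simp]: "uv d i \<in> carrier_vec d" by (simp add: uv_def)

lemma Tr_uv_act: "x \<in> carrier_vec d \<Longrightarrow> i < d \<Longrightarrow> Tr d (uv d i) *\<^sub>v x = x + x $ (d-1-i) \<cdot>\<^sub>v uv d i"
  by (simp add: Tr_act Bf_unit2 uv_def)

lemma Tr_uv2_act: "x \<in> carrier_vec d \<Longrightarrow> i < d \<Longrightarrow> j < d \<Longrightarrow>
  Tr d (uv d i + uv d j) *\<^sub>v x = x + (x $ (d-1-i) + x $ (d-1-j)) \<cdot>\<^sub>v (uv d i + uv d j)"
  by (simp add: Tr_act Bf_unit2 uv_def Bf_add2)

lemma gen_a_Tr: assumes n: "n > 2"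
  shows "gen_a n = Tr (2*n) (uv (2*n) n) * Tr (2*n) (uv (2*n) n + uv (2*n) 0)"
proof (rule mat_eq_vec[where d="2*n"])
  fix x :: "bit vec" assume x: "x \<in> carrier_vec (2*n)"
  let ?d = "2*n"
  have c1: "1\<^sub>m ?d + Eunit ?d 1 n \<in> carrier_mat ?d ?d" "1\<^sub>m ?d + Eunit ?d (n+1) ?d \<in> carrier_mat ?d ?d"
     "1\<^sub>m ?d + Eunit ?d 1 ?d \<in> carrier_mat ?d ?d" by auto
  have "gen_a n *\<^sub>v x = (1\<^sub>m ?d + Eunit ?d 1 n) *\<^sub>v ((1\<^sub>m ?d + Eunit ?d (n+1) ?d) *\<^sub>v ((1\<^sub>m ?d + Eunit ?d 1 ?d) *\<^sub>v x))"
    unfolding gen_a_def using c1 x by (simp add: assoc_sq[of _ "2*n"])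
  also have "\<dots> = Tr (2*n) (uv (2*n) n) *\<^sub>v (Tr (2*n) (uv (2*n) n + uv (2*n) 0) *\<^sub>v x)"
  proof (rule eq_vecI)
    fix i assume "i < dim_vec (Tr (2*n) (uv (2*n) n) *\<^sub>v (Tr (2*n) (uv (2*n) n + uv (2*n) 0) *\<^sub>v x))"
    hence i: "i < 2*n" by simp
    show "((1\<^sub>m ?d + Eunit ?d 1 n) *\<^sub>v ((1\<^sub>m ?d + Eunit ?d (n+1) ?d) *\<^sub>v ((1\<^sub>m ?d + Eunit ?d 1 ?d) *\<^sub>v x))) $ i
       = (Tr (2*n) (uv (2*n) n) *\<^sub>v (Tr (2*n) (uv (2*n) n + uv (2*n) 0) *\<^sub>v x)) $ i"
      using n x i by (simp add: IE_act Tr_uv_act Tr_uv2_act) (auto simp: uv_def algebra_simps)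
  qed (insert x, simp add: IE_act Tr_uv_act Tr_uv2_act Eunit_def)
  finally show "gen_a n *\<^sub>v x = (Tr (2*n) (uv (2*n) n) * Tr (2*n) (uv (2*n) n + uv (2*n) 0)) *\<^sub>v x"
    using x by (simp add: assoc_sq[of _ "2*n"])
qed (auto simp: gen_a_def)

definition sg :: "nat \<Rightarrow> nat \<Rightarrow> nat" where
  "sg n c = (if c + 1 < n then c + 1 else if c + 1 = n then 2*n - 1 else if c = n then 0 else c - 1)"
definition sgi :: "nat \<Rightarrow> nat \<Rightarrow> nat" where
  "sgi n r = (if r = 0 then n else if r < n then r - 1 else if r = 2*n - 1 then n - 1 else r + 1)"

lemma sg_lt: "n > 2 \<Longrightarrow> c < 2*n \<Longrightarrow> sg n c < 2*n" by (auto simp: sg_def)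
lemma sgi_lt: "n > 2 \<Longrightarrow> r < 2*n \<Longrightarrow> sgi n r < 2*n" by (auto simp: sgi_def)
lemma sg_sgi: "n > 2 \<Longrightarrow> r < 2*n \<Longrightarrow> sg n (sgi n r) = r" by (auto simp: sg_def sgi_def)
lemma sgi_sg: "n > 2 \<Longrightarrow> c < 2*n \<Longrightarrow> sgi n (sg n c) = c" by (auto simp: sg_def sgi_def)
lemma sgi_rev: "n > 2 \<Longrightarrow> r < 2*n \<Longrightarrow> sgi n (2*n-1-r) = 2*n-1-sgi n r" by (auto simp: sgi_def)

lemma w_hat_eq: assumes n: "n > 2"
  shows "w_hat n = mat (2*n) (2*n) (\<lambda>(r,c). if r = sg n c then 1 else 0)"
proof (rule eq_matI)
  fix r c assume "r < dim_row (mat (2*n) (2*n) (\<lambda>(r,c). if r = sg n c then (1::bit) else 0))"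
    "c < dim_col (mat (2*n) (2*n) (\<lambda>(r,c). if r = sg n c then (1::bit) else 0))"
  hence rc: "r < 2*n" "c < 2*n" by auto
  have "((1 \<le> c+1 \<and> c+1 \<le> n - 1 \<and> r+1 = c+1 + 1) \<or> (r+1 = 2*n \<and> c+1 = n)
        \<or> (n + 2 \<le> c+1 \<and> c+1 \<le> 2*n \<and> r+1 = c+1 - 1) \<or> (r+1 = 1 \<and> c+1 = n + 1)) \<longleftrightarrow> r = sg n c"
    using n rc unfolding sg_def by auto
  thus "w_hat n $$ (r, c) = mat (2*n) (2*n) (\<lambda>(r,c). if r = sg n c then (1::bit) else 0) $$ (r, c)"
    using rc unfolding w_hat_def by (simp add: Let_def)
qed (auto simp: w_hat_def)

lemma w_carrier[simp]: "w_hat n \<in> carrier_mat (2*n) (2*n)" by (simp add: w_hat_def)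

lemma w_act: assumes n: "n > 2" and x: "x \<in> carrier_vec (2*n)"
  shows "w_hat n *\<^sub>v x = vec (2*n) (\<lambda>r. x $ sgi n r)"
proof (rule eq_vecI)
  fix r assume "r < dim_vec (vec (2*n) (\<lambda>r. x $ sgi n r))"
  hence r: "r < 2*n" by simp
  have "(w_hat n *\<^sub>v x) $ r = (\<Sum>c\<in>{0..<2*n}. (if r = sg n c then 1 else 0) * x $ c)"
    using r x by (simp add: w_hat_eq[OF n] scalar_prod_def)
  also have "\<dots> = (\<Sum>c\<in>{0..<2*n}. if c = sgi n r then x $ c else 0)"
    using n r by (intro sum.cong) (auto simp: sg_sgi sgi_sg)
  also have "\<dots> = x $ sgi n r" using sgi_lt[OF n r] by simp
  finally show "(w_hat n *\<^sub>v x) $ r = vec (2*n) (\<lambda>r. x $ sgi n r) $ r" using r by simp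
qed (insert x, simp add: w_hat_def)

lemma w_SpB: assumes n: "n > 2" shows "SpB (2*n) (w_hat n)"
  unfolding SpB_def
proof (intro conjI ballI)
  fix x y :: "bit vec" assume x: "x \<in> carrier_vec (2*n)" and y: "y \<in> carrier_vec (2*n)"
  have "Bf (2*n) (w_hat n *\<^sub>v x) (w_hat n *\<^sub>v y) = (\<Sum>i<2*n. x $ sgi n i * y $ sgi n (2*n-1-i))"
    unfolding Bf_def using x y by (simp add: w_act[OF n])
  also have "\<dots> = (\<Sum>i<2*n. x $ sgi n i * y $ (2*n-1-sgi n i))"
    using n by (intro sum.cong) (auto simp: sgi_rev[simplified])
  also have "\<dots> = (\<Sum>i<2*n. x $ i * y $ (2*n-1-i))"
    using n by (intro sum.reindex_bij_witness[where i="sg n" and j="sgi n"]) (auto simp: sg_sgi sgi_sg sg_lt sgi_lt)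
  finally show "Bf (2*n) (w_hat n *\<^sub>v x) (w_hat n *\<^sub>v y) = Bf (2*n) x y" unfolding Bf_def .
qed simp

lemma w_uv: assumes n: "n > 2" and k: "k < 2*n"
  shows "w_hat n *\<^sub>v uv (2*n) k = uv (2*n) (sg n k)"
  using n k by (intro eq_vecI) (auto simp: w_act uv_def sgi_lt sg_lt sg_sgi sgi_sg)


definition inJ :: "nat \<Rightarrow> nat \<Rightarrow> bool" where
  "inJ n i \<longleftrightarrow> i = 0 \<or> i = 1 \<or> i = n - 1 \<or> i = n \<or> i = 2*n - 1"

definition NF :: "nat \<Rightarrow> bit vec \<Rightarrow> (nat \<Rightarrow> bit) \<Rightarrow> bit vec" where
  "NF n x c = vec (2*n) (\<lambda>i. x$i + (if inJ n i then c i else 0))"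

lemma NF_carrier[simp]: "NF n x c \<in> carrier_vec (2*n)" by (simp add: NF_def)

lemma NF_idx: "i < 2*n \<Longrightarrow> NF n x c $ i = x$i + (if inJ n i then c i else 0)"
  by (simp add: NF_def)

lemma NF_cong: "(\<And>i. inJ n i \<Longrightarrow> c i = c' i) \<Longrightarrow> NF n x c = NF n x c'"
  unfolding NF_def by (intro eq_vecI) auto

lemma NF_zero: "x \<in> carrier_vec (2*n) \<Longrightarrow> NF n x (\<lambda>_. 0) = x"
  unfolding NF_def by (intro eq_vecI) auto

lemma Tr1_NF: assumes n: "n > 2" and x: "x \<in> carrier_vec (2*n)" and j: "inJ n j"
  shows "Tr (2*n) (uv (2*n) j) *\<^sub>v NF n x c = NF n x (c(j := c j + NF n x c $ (2*n-1-j)))"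
proof -
  have jl: "j < 2*n" using n j by (auto simp: inJ_def)
  show ?thesis using x jl j
    by (simp add: Tr_uv_act) (intro eq_vecI, auto simp: NF_def uv_def algebra_simps)
qed

lemma Tr2_NF: assumes n: "n > 2" and x: "x \<in> carrier_vec (2*n)" and j: "inJ n j" and k: "inJ n k" and jk: "j \<noteq> k"
  shows "Tr (2*n) (uv (2*n) j + uv (2*n) k) *\<^sub>v NF n x c =
    NF n x (c(j := c j + (NF n x c $ (2*n-1-j) + NF n x c $ (2*n-1-k)),
              k := c k + (NF n x c $ (2*n-1-j) + NF n x c $ (2*n-1-k))))"
proof -
  have jl: "j < 2*n" "k < 2*n" using n j k by (auto simp: inJ_def)
  show ?thesis using x jl j k jk
    by (simp add: Tr_uv2_act) (intro eq_vecI, auto simp: NF_def uv_def algebra_simps)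
qed

lemma word5: assumes n: "n > 2"
  defines "TA0 \<equiv> Tr (2*n) (uv (2*n) n)" and "TB0 \<equiv> Tr (2*n) (uv (2*n) n + uv (2*n) 0)"
      and "TA1 \<equiv> Tr (2*n) (uv (2*n) 0)" and "TB1 \<equiv> Tr (2*n) (uv (2*n) 0 + uv (2*n) 1)"
      and "TAn \<equiv> Tr (2*n) (uv (2*n) (n-1))" and "TBn \<equiv> Tr (2*n) (uv (2*n) (n-1) + uv (2*n) (2*n-1))"
  defines "G \<equiv> (TA0 * TB0) * (TA1 * TB1) * (TAn * TBn)"
  shows "G * G * G * G * G = Tr (2*n) (uv (2*n) 1)"
proof (rule mat_eq_vec[where d="2*n"])
  have cs: "TA0 \<in> carrier_mat (2*n) (2*n)" "TB0 \<in> carrier_mat (2*n) (2*n)" "TA1 \<in> carrier_mat (2*n) (2*n)"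
    "TB1 \<in> carrier_mat (2*n) (2*n)" "TAn \<in> carrier_mat (2*n) (2*n)" "TBn \<in> carrier_mat (2*n) (2*n)"
    unfolding TA0_def TB0_def TA1_def TB1_def TAn_def TBn_def by auto
  hence cG: "G \<in> carrier_mat (2*n) (2*n)" unfolding G_def by auto
  thus "G * G * G * G * G \<in> carrier_mat (2*n) (2*n)" by auto
  show "Tr (2*n) (uv (2*n) 1) \<in> carrier_mat (2*n) (2*n)" by simp
  fix x :: "bit vec" assume x: "x \<in> carrier_vec (2*n)"
  define m where "m = n - 1"
  define q where "q = 2*n - 1"
  define r where "r = 2*n - 2"
  have lt: "0 < 2*n" "1 < 2*n" "m < 2*n" "n < 2*n" "q < 2*n" "r < 2*n" using n unfolding m_def q_def r_def by auto
  have ds: "0 \<noteq> m" "0 \<noteq> n" "0 \<noteq> q" "1 \<noteq> m" "1 \<noteq> n" "1 \<noteq> q" "m \<noteq> n" "m \<noteq> q" "n \<noteq> q"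
     "m \<noteq> 0" "n \<noteq> 0" "q \<noteq> 0" "m \<noteq> 1" "n \<noteq> 1" "q \<noteq> 1" "n \<noteq> m" "q \<noteq> m" "q \<noteq> n"
    using n unfolding m_def q_def r_def by auto
  have jj: "inJ n 0" "inJ n 1" "inJ n m" "inJ n n" "inJ n q" "\<not> inJ n r"
    using n unfolding m_def q_def r_def inJ_def by auto
  have rd: "2*n-1-n = m" "2*n-1-0 = q" "2*n-1-m = n" "2*n-1-q = 0" "2*n-1-1 = r"
    using n unfolding m_def q_def r_def by auto
  have ix: "\<And>c. NF n x c $ 0 = x$0 + c 0" "\<And>c. NF n x c $ m = x$m + c m" "\<And>c. NF n x c $ n = x$n + c n"
    "\<And>c. NF n x c $ q = x$q + c q" "\<And>c. NF n x c $ r = x$r"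
    using lt jj by (simp_all add: NF_idx)
  have tA0: "\<And>c. TA0 *\<^sub>v NF n x c = NF n x (c(n := c n + (x$m + c m)))"
    unfolding TA0_def using Tr1_NF[OF n x jj(4)] rd ix by simp
  have tA1: "\<And>c. TA1 *\<^sub>v NF n x c = NF n x (c(0 := c 0 + (x$q + c q)))"
    unfolding TA1_def using Tr1_NF[OF n x jj(1)] rd ix by simp
  have tAn: "\<And>c. TAn *\<^sub>v NF n x c = NF n x (c(m := c m + (x$n + c n)))"
  proof -
    have e: "2*n - Suc m = n" using n unfolding m_def by auto
    show "\<And>c. TAn *\<^sub>v NF n x c = NF n x (c(m := c m + (x$n + c n)))"
      unfolding TAn_def m_def[symmetric] using Tr1_NF[OF n x jj(3)] e ix by simp
  qed
  have tB0: "\<And>c. TB0 *\<^sub>v NF n x c = NF n x (c(n := c n + ((x$m + c m) + (x$q + c q)), 0 := c 0 + ((x$m + c m) + (x$q + c q))))"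
    unfolding TB0_def using Tr2_NF[OF n x jj(4) jj(1) ds(11)] rd ix by simp
  have tB1: "\<And>c. TB1 *\<^sub>v NF n x c = NF n x (c(0 := c 0 + ((x$q + c q) + x$r), 1 := c 1 + ((x$q + c q) + x$r)))"
  proof -
    have e: "2*n - Suc (Suc 0) = r" using n unfolding r_def by auto
    show "\<And>c. TB1 *\<^sub>v NF n x c = NF n x (c(0 := c 0 + ((x$q + c q) + x$r), 1 := c 1 + ((x$q + c q) + x$r)))"
      unfolding TB1_def using Tr2_NF[OF n x jj(1) jj(2)] rd ix e by simp
  qed
  have tBn: "\<And>c. TBn *\<^sub>v NF n x c = NF n x (c(m := c m + ((x$n + c n) + (x$0 + c 0)), q := c q + ((x$n + c n) + (x$0 + c 0))))"
  proof -
    have e: "2*n - Suc m = n" using n unfolding m_def by auto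
    show "\<And>c. TBn *\<^sub>v NF n x c = NF n x (c(m := c m + ((x$n + c n) + (x$0 + c 0)), q := c q + ((x$n + c n) + (x$0 + c 0))))"
      unfolding TBn_def m_def[symmetric] q_def[symmetric] using Tr2_NF[OF n x jj(3) jj(5) ds(8)] rd ix e by simp
  qed
  have gG: "\<And>y. y \<in> carrier_vec (2*n) \<Longrightarrow> G *\<^sub>v y = TA0 *\<^sub>v (TB0 *\<^sub>v (TA1 *\<^sub>v (TB1 *\<^sub>v (TAn *\<^sub>v (TBn *\<^sub>v y)))))"
    unfolding G_def using cs by (simp add: assoc_sq[of _ "2*n"])
  have gG': "\<And>c. G *\<^sub>v NF n x c = TA0 *\<^sub>v (TB0 *\<^sub>v (TA1 *\<^sub>v (TB1 *\<^sub>v (TAn *\<^sub>v (TBn *\<^sub>v NF n x c)))))"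
    by (rule gG) simp
  have "(G * G * G * G * G) *\<^sub>v x = G *\<^sub>v (G *\<^sub>v (G *\<^sub>v (G *\<^sub>v (G *\<^sub>v NF n x (\<lambda>_. 0)))))"
    using cG x by (simp add: assoc_sq[of _ "2*n"] NF_zero)
  also have "\<dots> = NF n x ((\<lambda>_. 0)(1 := x$r))"
  proof -
    have ij: "\<And>i. inJ n i \<longleftrightarrow> i = 0 \<or> i = 1 \<or> i = m \<or> i = n \<or> i = q"
      unfolding inJ_def m_def q_def by auto
    have neq: "\<And>c c'. NF n x c = NF n x c' \<longleftrightarrow> (\<forall>i. inJ n i \<longrightarrow> c i = c' i)"
    proof
      fix c c' assume e: "NF n x c = NF n x c'"
      show "\<forall>i. inJ n i \<longrightarrow> c i = c' i"
      proof (intro allI impI)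
        fix i assume i: "inJ n i"
        hence il: "i < 2*n" using n by (auto simp: inJ_def)
        have "NF n x c $ i = NF n x c' $ i" using e by simp
        thus "c i = c' i" using i il by (simp add: NF_idx)
      qed
    qed (rule NF_cong, auto)
    define N5 where "N5 = (\<lambda>c0 c1 cm cn cq. NF n x ((\<lambda>_. 0)(0 := c0, 1 := c1, m := cm, n := cn, q := cq)))"
    have nf5: "\<And>c. NF n x c = N5 (c 0) (c 1) (c m) (c n) (c q)"
      unfolding N5_def by (rule NF_cong) (use ds in \<open>auto simp: ij\<close>)
    have up: "\<And>c0 c1 cm cn cq. ((\<lambda>_. 0)(0 := c0, 1 := c1, m := cm, n := cn, q := cq)) 0 = c0"
      "\<And>c0 c1 cm cn cq. ((\<lambda>_. 0)(0 := c0, 1 := c1, m := cm, n := cn, q := cq)) 1 = c1"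
      "\<And>c0 c1 cm cn cq. ((\<lambda>_. 0)(0 := c0, 1 := c1, m := cm, n := cn, q := cq)) m = cm"
      "\<And>c0 c1 cm cn cq. ((\<lambda>_. 0)(0 := c0, 1 := c1, m := cm, n := cn, q := cq)) n = cn"
      "\<And>c0 c1 cm cn cq. ((\<lambda>_. 0)(0 := c0, 1 := c1, m := cm, n := cn, q := cq)) q = cq"
      using ds by auto
    have sA0: "\<And>c0 c1 cm cn cq. TA0 *\<^sub>v N5 c0 c1 cm cn cq = N5 c0 c1 cm (cn + (x$m + cm)) cq"
      by (subst N5_def, subst tA0, subst nf5) (use ds in \<open>simp add: up\<close>)
    have sA1: "\<And>c0 c1 cm cn cq. TA1 *\<^sub>v N5 c0 c1 cm cn cq = N5 (c0 + (x$q + cq)) c1 cm cn cq"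
      by (subst N5_def, subst tA1, subst nf5) (use ds in \<open>simp add: up\<close>)
    have sAn: "\<And>c0 c1 cm cn cq. TAn *\<^sub>v N5 c0 c1 cm cn cq = N5 c0 c1 (cm + (x$n + cn)) cn cq"
      by (subst N5_def, subst tAn, subst nf5) (use ds in \<open>simp add: up\<close>)
    have sB0: "\<And>c0 c1 cm cn cq. TB0 *\<^sub>v N5 c0 c1 cm cn cq =
       N5 (c0 + ((x$m + cm) + (x$q + cq))) c1 cm (cn + ((x$m + cm) + (x$q + cq))) cq"
      by (subst N5_def, subst tB0, subst nf5) (use ds in \<open>simp add: up\<close>)
    have sB1: "\<And>c0 c1 cm cn cq. TB1 *\<^sub>v N5 c0 c1 cm cn cq =
       N5 (c0 + ((x$q + cq) + x$r)) (c1 + ((x$q + cq) + x$r)) cm cn cq"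
      by (subst N5_def, subst tB1, subst nf5) (use ds in \<open>simp add: up\<close>)
    have sBn: "\<And>c0 c1 cm cn cq. TBn *\<^sub>v N5 c0 c1 cm cn cq =
       N5 c0 c1 (cm + ((x$n + cn) + (x$0 + c0))) cn (cq + ((x$n + cn) + (x$0 + c0)))"
      by (subst N5_def, subst tBn, subst nf5) (use ds in \<open>simp add: up\<close>)
    have gN: "\<And>c0 c1 cm cn cq. G *\<^sub>v N5 c0 c1 cm cn cq = TA0 *\<^sub>v (TB0 *\<^sub>v (TA1 *\<^sub>v (TB1 *\<^sub>v (TAn *\<^sub>v (TBn *\<^sub>v N5 c0 c1 cm cn cq)))))"
      unfolding N5_def by (rule gG') 
    have z: "NF n x (\<lambda>_. 0) = N5 0 0 0 0 0" by (subst nf5) simp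
    have z2: "NF n x ((\<lambda>_. 0)(1 := x$r)) = N5 0 (x$r) 0 0 0" by (subst nf5) (use ds in simp)
    have "\<And>a0 a1 a2 a3 a4. x$0 = a0 \<Longrightarrow> x$m = a1 \<Longrightarrow> x$n = a2 \<Longrightarrow> x$q = a3 \<Longrightarrow> x$r = a4 \<Longrightarrow>
      G *\<^sub>v (G *\<^sub>v (G *\<^sub>v (G *\<^sub>v (G *\<^sub>v N5 0 0 0 0 0)))) = N5 0 a4 0 0 0"
    proof -
      fix a0 a1 a2 a3 a4 :: bit
      assume a: "x$0 = a0" "x$m = a1" "x$n = a2" "x$q = a3" "x$r = a4"
      show "G *\<^sub>v (G *\<^sub>v (G *\<^sub>v (G *\<^sub>v (G *\<^sub>v N5 0 0 0 0 0)))) = N5 0 a4 0 0 0"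
        using a by (cases a0; cases a1; cases a2; cases a3; cases a4) (simp_all add: gN sA0 sA1 sAn sB0 sB1 sBn)
    qed
    thus ?thesis unfolding z z2 by auto

  qed
  also have "\<dots> = Tr (2*n) (uv (2*n) 1) *\<^sub>v x"
  proof -
    have "Tr (2*n) (uv (2*n) 1) *\<^sub>v x = x + x$r \<cdot>\<^sub>v uv (2*n) 1"
    proof -
      have e: "2*n - Suc (Suc 0) = r" unfolding r_def by simp
      show ?thesis using Tr_uv_act[OF x, of 1] lt n e by simp
    qed
    also have "\<dots> = NF n x ((\<lambda>_. 0)(1 := x$r))"
      using x lt ds unfolding m_def q_def by (intro eq_vecI) (auto simp: NF_def uv_def inJ_def)
    finally show ?thesis by simp
  qed
  finally show "(G * G * G * G * G) *\<^sub>v x = Tr (2*n) (uv (2*n) 1) *\<^sub>v x" .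
qed


abbreviation HH :: "nat \<Rightarrow> bit mat set" where "HH n \<equiv> gen_grp (2*n) {gen_a n, w_hat n}"

lemma gen_a_SpB: "n > 2 \<Longrightarrow> SpB (2*n) (gen_a n)"
  by (simp add: gen_a_Tr SpB_mult Tr_SpB)

lemma H_SpB: assumes n: "n > 2" and g: "g \<in> HH n" shows "SpB (2*n) g"
  using g
proof (induction rule: gen_grp.induct)
  case one thus ?case by (rule SpB_one)
next
  case (base s) thus ?case using gen_a_SpB[OF n] w_SpB[OF n] by auto
next
  case (mult a b) thus ?case using SpB_mult by blast
next
  case (inv a b)
  have ac: "a \<in> carrier_mat (2*n) (2*n)" using inv.IH unfolding SpB_def by auto
  show ?case unfolding SpB_def
  proof (intro conjI ballI)
    show "b \<in> carrier_mat (2*n) (2*n)" by fact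
    fix x y :: "bit vec" assume x: "x \<in> carrier_vec (2*n)" and y: "y \<in> carrier_vec (2*n)"
    have "Bf (2*n) (b *\<^sub>v x) (b *\<^sub>v y) = Bf (2*n) (a *\<^sub>v (b *\<^sub>v x)) (a *\<^sub>v (b *\<^sub>v y))"
      using inv.IH inv.hyps(2) x y unfolding SpB_def by auto
    also have "\<dots> = Bf (2*n) ((a * b) *\<^sub>v x) ((a * b) *\<^sub>v y)"
      using ac inv.hyps(2) x y by (simp add: assoc_sq[of _ "2*n"])
    also have "\<dots> = Bf (2*n) x y" using inv.hyps(3) x y by simp
    finally show "Bf (2*n) (b *\<^sub>v x) (b *\<^sub>v y) = Bf (2*n) x y" .
  qed
qed

lemma H_sub: "n > 2 \<Longrightarrow> HH n \<subseteq> Sp2 n"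
  using H_SpB Sp2_iff by blast

lemma H_inv: assumes n: "n > 2" and g: "g \<in> HH n" shows "Spinv n g \<in> HH n"
proof -
  have S: "SpB (2*n) g" by (rule H_SpB[OF n g])
  hence "g \<in> carrier_mat (2*n) (2*n)" unfolding SpB_def by auto
  thus ?thesis using gen_grp.inv[OF g Spinv_carrier Spinv_right[OF S]] by auto
qed

lemma conj_vec: assumes g: "SpB d g" and u: "u \<in> carrier_vec d" and y: "y \<in> carrier_vec d"
  shows "g *\<^sub>v (Tr d u *\<^sub>v y) = Tr d (g *\<^sub>v u) *\<^sub>v (g *\<^sub>v y)"
proof -
  have gc: "g \<in> carrier_mat d d" using g unfolding SpB_def by auto
  have "g *\<^sub>v (Tr d u *\<^sub>v y) = (g * Tr d u) *\<^sub>v y" using gc y by (simp add: assoc_sq[of _ d])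
  also have "\<dots> = (Tr d (g *\<^sub>v u) * g) *\<^sub>v y" using Tr_conj[OF g u] by simp
  also have "\<dots> = Tr d (g *\<^sub>v u) *\<^sub>v (g *\<^sub>v y)" using gc y by (simp add: assoc_sq[of _ d])
  finally show ?thesis .
qed

lemma H_conj: assumes n: "n > 2" and g: "g \<in> HH n" and T: "Tr (2*n) u * Tr (2*n) v \<in> HH n"
  and u: "u \<in> carrier_vec (2*n)" and v: "v \<in> carrier_vec (2*n)"
  shows "Tr (2*n) (g *\<^sub>v u) * Tr (2*n) (g *\<^sub>v v) \<in> HH n"
proof -
  have S: "SpB (2*n) g" by (rule H_SpB[OF n g])
  have gc: "g \<in> carrier_mat (2*n) (2*n)" using S unfolding SpB_def by auto
  have gi: "Spinv n g \<in> carrier_mat (2*n) (2*n)" using Spinv_carrier[OF gc] .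
  have "g * (Tr (2*n) u * Tr (2*n) v) * Spinv n g = Tr (2*n) (g *\<^sub>v u) * Tr (2*n) (g *\<^sub>v v)"
  proof (rule mat_eq_vec[where d="2*n"])
    fix x :: "bit vec" assume x: "x \<in> carrier_vec (2*n)"
    have gx: "g *\<^sub>v (Spinv n g *\<^sub>v x) = x" using Spinv_right[OF S] gc gi x
      by (metis assoc_sq one_mult_mat_vec)
    have "(g * (Tr (2*n) u * Tr (2*n) v) * Spinv n g) *\<^sub>v x = g *\<^sub>v (Tr (2*n) u *\<^sub>v (Tr (2*n) v *\<^sub>v (Spinv n g *\<^sub>v x)))"
      using gc gi x by (simp add: assoc_sq[of _ "2*n"])
    also have "\<dots> = Tr (2*n) (g *\<^sub>v u) *\<^sub>v (Tr (2*n) (g *\<^sub>v v) *\<^sub>v (g *\<^sub>v (Spinv n g *\<^sub>v x)))"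
      using S u v x gi by (simp add: conj_vec)
    also have "\<dots> = (Tr (2*n) (g *\<^sub>v u) * Tr (2*n) (g *\<^sub>v v)) *\<^sub>v x" using gx x by (simp add: assoc_sq[of _ "2*n"])
    finally show "(g * (Tr (2*n) u * Tr (2*n) v) * Spinv n g) *\<^sub>v x = (Tr (2*n) (g *\<^sub>v u) * Tr (2*n) (g *\<^sub>v v)) *\<^sub>v x" .
  qed (insert gc gi, auto)
  moreover have "g * (Tr (2*n) u * Tr (2*n) v) * Spinv n g \<in> HH n"
    by (rule gen_grp.mult[OF gen_grp.mult[OF g T] H_inv[OF n g]])
  ultimately show ?thesis by simp
qed

lemma Tr_zero: "Tr d (0\<^sub>v d) = 1\<^sub>m d" by (intro eq_matI) (auto simp: Tr_def)

lemma H_conj1: assumes n: "n > 2" and g: "g \<in> HH n" and T: "Tr (2*n) u \<in> HH n"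
  and u: "u \<in> carrier_vec (2*n)"
  shows "Tr (2*n) (g *\<^sub>v u) \<in> HH n"
proof -
  have S: "SpB (2*n) g" by (rule H_SpB[OF n g])
  have gc: "g \<in> carrier_mat (2*n) (2*n)" using S unfolding SpB_def by auto
  have z: "g *\<^sub>v 0\<^sub>v (2*n) = 0\<^sub>v (2*n)" using gc by (intro eq_vecI) auto
  have "Tr (2*n) u * Tr (2*n) (0\<^sub>v (2*n)) \<in> HH n" using T by (simp add: Tr_zero)
  from H_conj[OF n g this u] z show ?thesis by (simp add: Tr_zero)
qed

lemma R1: assumes n: "n > 2" and y: "Tr (2*n) y \<in> HH n" and v: "Tr (2*n) v \<in> HH n"
  and yc: "y \<in> carrier_vec (2*n)" and vc: "v \<in> carrier_vec (2*n)"
  shows "Tr (2*n) (Tr (2*n) y *\<^sub>v v) \<in> HH n"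
  by (rule H_conj1[OF n y v vc])


definition cpos :: "nat \<Rightarrow> nat \<Rightarrow> nat" where
  "cpos n j = (let m = j mod (2*n) in if m = 0 then n else if m \<le> n then m - 1 else 3*n - m)"

lemma cpos_lt: "n > 0 \<Longrightarrow> cpos n j < 2*n"
proof -
  assume n: "n > 0"
  have "j mod (2*n) < 2*n" using n by simp
  thus ?thesis using n unfolding cpos_def Let_def by auto
qed

lemma cpos_per: "cpos n (j + 2*n) = cpos n j" by (simp add: cpos_def)

lemma sg_cpos: assumes n: "n > 2" shows "sg n (cpos n j) = cpos n (Suc j)"
proof -
  define m where "m = j mod (2*n)"
  have ml: "m < 2*n" using n unfolding m_def by simp
  have sm: "Suc j mod (2*n) = (if Suc m = 2*n then 0 else Suc m)" unfolding m_def by (simp add: mod_Suc)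
  have c1: "cpos n j = (if m = 0 then n else if m \<le> n then m - 1 else 3*n - m)" unfolding cpos_def m_def by simp
  have c2: "cpos n (Suc j) = (if Suc m = 2*n then n else if Suc m \<le> n then m else 3*n - Suc m)"
    unfolding cpos_def Let_def sm by simp
  show ?thesis unfolding c1 c2 sg_def using ml n by auto
qed

lemma cpos_partner: assumes n: "n > 2" shows "2*n - 1 - cpos n j = cpos n (j + n)"
proof -
  define m where "m = j mod (2*n)"
  have ml: "m < 2*n" using n unfolding m_def by simp
  have "(j + n) mod (2*n) = (m + n) mod (2*n)" unfolding m_def by (simp add: mod_add_left_eq)
  also have "\<dots> = (if m < n then m + n else m - n)"
  proof (cases "m < n")
    case True thus ?thesis using ml by simp
  next
    case False
    hence eq: "m + n = (m - n) + 2*n" by simp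
    have "(m + n) mod (2*n) = (m - n) mod (2*n)" by (subst eq, rule mod_add_self2)
    thus ?thesis using False ml by simp
  qed
  finally have sm: "(j + n) mod (2*n) = (if m < n then m + n else m - n)" .
  have c1: "cpos n j = (if m = 0 then n else if m \<le> n then m - 1 else 3*n - m)" unfolding cpos_def m_def by simp
  show ?thesis
  proof (cases "m < n")
    case True
    have "cpos n (j + n) = (if m + n \<le> n then m + n - 1 else 3*n - (m + n))"
      unfolding cpos_def Let_def sm using True n by simp
    thus ?thesis unfolding c1 using True n by (cases "m = 0") auto
  next
    case False
    have "cpos n (j + n) = (if m - n = 0 then n else m - n - 1)"
      unfolding cpos_def Let_def sm using False n ml by auto
    thus ?thesis unfolding c1 using False n ml by (cases "m = n") auto
  qed
qed


lemma cpos_surj: assumes n: "n > 2" and i: "i < 2*n" shows "\<exists>j. cpos n j = i"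
proof -
  define j where "j = (if i = n then 0 else if i < n then i + 1 else 3*n - i)"
  have "j < 2*n" using n i unfolding j_def by auto
  hence "j mod (2*n) = j" by simp
  hence "cpos n j = i" unfolding cpos_def Let_def using n i unfolding j_def by auto
  thus ?thesis by blast
qed

lemma cpos_inj_res: assumes n: "n > 2" and a: "a < 2*n" and b: "b < 2*n" and e: "cpos n a = cpos n b"
  shows "a = b"
proof -
  have "cpos n a = (if a = 0 then n else if a \<le> n then a - 1 else 3*n - a)"
       "cpos n b = (if b = 0 then n else if b \<le> n then b - 1 else 3*n - b)"
    unfolding cpos_def using a b by simp_all
  thus ?thesis using e a b n by (simp split: if_splits)
qed

lemma mod_shift_ne: fixes s k N :: nat assumes "0 < k" "k < N" shows "(s + k) mod N \<noteq> s mod N"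
proof
  assume e: "(s + k) mod N = s mod N"
  have "N dvd (s + k) - s" using iffD1[OF mod_eq_dvd_iff_nat[of s "s+k" N] e] by simp
  hence "N dvd k" by simp
  hence "N \<le> k" using assms(1) by (rule dvd_imp_le)
  thus False using assms(2) by simp
qed

lemma cpos_mod: "cpos n (j mod (2*n)) = cpos n j" by (simp add: cpos_def)

lemma cpos_shift_ne: assumes n: "n > 2" and k: "0 < k" "k < 2*n" shows "cpos n (s + k) \<noteq> cpos n s"
proof
  assume e: "cpos n (s + k) = cpos n s"
  have e2: "cpos n ((s + k) mod (2*n)) = cpos n (s mod (2*n))" unfolding cpos_mod by (rule e)
  have l1: "(s + k) mod (2*n) < 2*n" "s mod (2*n) < 2*n" using n by simp_all
  have "(s + k) mod (2*n) = s mod (2*n)" by (rule cpos_inj_res[OF n l1 e2])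
  thus False using mod_shift_ne[OF k] by blast
qed


definition ee :: "nat \<Rightarrow> nat \<Rightarrow> bit vec" where "ee n j = uv (2*n) (cpos n j)"

lemma ee_carrier[simp]: "ee n j \<in> carrier_vec (2*n)" by (simp add: ee_def)

lemma w_ee: "n > 2 \<Longrightarrow> w_hat n *\<^sub>v ee n j = ee n (Suc j)"
  by (simp add: ee_def w_uv cpos_lt sg_cpos)

lemma cpos_small: "n > 2 \<Longrightarrow> cpos n 0 = n" "n > 2 \<Longrightarrow> cpos n 1 = 0" "n > 2 \<Longrightarrow> cpos n 2 = 1"
  "n > 2 \<Longrightarrow> cpos n n = n - 1" "n > 2 \<Longrightarrow> cpos n (Suc n) = 2*n - 1"
  by (auto simp: cpos_def)

lemma cpos_small': "n > 2 \<Longrightarrow> cpos n (Suc 0) = 0" "n > 2 \<Longrightarrow> cpos n (Suc (Suc 0)) = 1"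
  by (auto simp: cpos_def)

definition AA :: "nat \<Rightarrow> nat \<Rightarrow> bit mat" where
  "AA n k = Tr (2*n) (ee n k) * Tr (2*n) (ee n k + ee n (Suc k))"

lemma AA_H: assumes n: "n > 2" shows "AA n k \<in> HH n"
proof (induction k)
  case 0
  have "AA n 0 = gen_a n" unfolding AA_def ee_def using n by (simp add: cpos_small cpos_small' gen_a_Tr)
  thus ?case by (simp add: gen_grp.base)
next
  case (Suc k)
  have w: "w_hat n \<in> HH n" by (simp add: gen_grp.base)
  have "w_hat n *\<^sub>v (ee n k + ee n (Suc k)) = ee n (Suc k) + ee n (Suc (Suc k))"
    using n by (simp add: mult_add_distrib_mat_vec[of _ "2*n" "2*n"] w_ee)
  thus ?case using H_conj[OF n w Suc[unfolded AA_def]] n unfolding AA_def by (simp add: w_ee)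
qed

lemma Tr_ee2: assumes n: "n > 2" shows "Tr (2*n) (ee n 2) \<in> HH n"
proof -
  have G: "AA n 0 * AA n 1 * AA n n \<in> HH n" by (rule gen_grp.mult[OF gen_grp.mult[OF AA_H[OF n] AA_H[OF n]] AA_H[OF n]])
  have "(AA n 0 * AA n 1 * AA n n) * (AA n 0 * AA n 1 * AA n n) * (AA n 0 * AA n 1 * AA n n)
     * (AA n 0 * AA n 1 * AA n n) * (AA n 0 * AA n 1 * AA n n) \<in> HH n"
    by (rule gen_grp.mult[OF gen_grp.mult[OF gen_grp.mult[OF gen_grp.mult[OF G G] G] G] G])
  moreover have "(AA n 0 * AA n 1 * AA n n) * (AA n 0 * AA n 1 * AA n n) * (AA n 0 * AA n 1 * AA n n)
     * (AA n 0 * AA n 1 * AA n n) * (AA n 0 * AA n 1 * AA n n) = Tr (2*n) (ee n 2)"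
    using word5[OF n] n unfolding AA_def ee_def by (simp add: cpos_small cpos_small' numeral_2_eq_2)
  ultimately show ?thesis by simp
qed


lemma Tr_ee: assumes n: "n > 2" shows "Tr (2*n) (ee n k) \<in> HH n"
proof -
  have w: "w_hat n \<in> HH n" by (simp add: gen_grp.base)
  have a: "\<And>i. Tr (2*n) (ee n (2 + i)) \<in> HH n"
  proof -
    fix i show "Tr (2*n) (ee n (2 + i)) \<in> HH n"
    proof (induction i)
      case 0 thus ?case using Tr_ee2[OF n] by simp
    next
      case (Suc i)
      from H_conj1[OF n w Suc] n show ?case by (simp add: w_ee)
    qed
  qed
  have e: "2 + (k + 2*n - 2) = k + 2*n" using n by simp
  have "ee n k = ee n (2 + (k + 2*n - 2))" unfolding e using cpos_per[of n k] by (simp add: ee_def)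
  thus ?thesis using a by metis
qed

lemma Tr_uv_H: assumes n: "n > 2" and i: "i < 2*n" shows "Tr (2*n) (uv (2*n) i) \<in> HH n"
proof -
  obtain j where "cpos n j = i" using cpos_surj[OF n i] by blast
  thus ?thesis using Tr_ee[OF n, of j] by (simp add: ee_def)
qed

lemma H_back: assumes n: "n > 2" and T: "Tr (2*n) y \<in> HH n" and y: "y \<in> carrier_vec (2*n)"
  and X: "X \<in> carrier_mat (2*n) (2*n)" and TX: "Tr (2*n) y * X \<in> HH n"
  shows "X \<in> HH n"
proof -
  have "Tr (2*n) y * (Tr (2*n) y * X) = X"
    using Tr_sq[OF y] X by (simp add: assoc_mm_sq[of _ "2*n", symmetric])
  moreover have "Tr (2*n) y * (Tr (2*n) y * X) \<in> HH n" by (rule gen_grp.mult[OF T TX])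
  ultimately show ?thesis by simp
qed

lemma Tr_adj: assumes n: "n > 2" shows "Tr (2*n) (ee n k + ee n (Suc k)) \<in> HH n"
  using H_back[OF n Tr_ee[OF n, of k]] AA_H[OF n, of k] unfolding AA_def by simp

lemma pt_nofix: "n > 0 \<Longrightarrow> (i::nat) \<noteq> 2*n - 1 - i" by presburger

lemma ext3: assumes n: "n > 2" and lt: "P < 2*n" "Q < 2*n" "R < 2*n"
  and d: "P \<noteq> Q" "P \<noteq> R" "Q \<noteq> R" "P \<noteq> 2*n-1-Q" "P \<noteq> 2*n-1-R" "Q \<noteq> 2*n-1-R"
  and H1: "Tr (2*n) (uv (2*n) P + uv (2*n) Q) \<in> HH n"
  and H2: "Tr (2*n) (uv (2*n) (2*n-1-Q) + uv (2*n) (2*n-1-R)) \<in> HH n"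
  shows "Tr (2*n) (uv (2*n) P + uv (2*n) R) \<in> HH n"
proof -
  define P' Q' R' where "P' = 2*n-1-P" and "Q' = 2*n-1-Q" and "R' = 2*n-1-R"
  have lt': "P' < 2*n" "Q' < 2*n" "R' < 2*n" using lt unfolding P'_def Q'_def R'_def by auto
  have pp: "2*n-1-P = P'" "2*n-1-Q = Q'" "2*n-1-R = R'" "2*n-1-P' = P" "2*n-1-Q' = Q" "2*n-1-R' = R"
    using lt unfolding P'_def Q'_def R'_def by auto
  have dd: "P \<noteq> Q" "P \<noteq> R" "Q \<noteq> R" "P \<noteq> Q'" "P \<noteq> R'" "Q \<noteq> R'"
     "P \<noteq> P'" "Q \<noteq> Q'" "R \<noteq> R'" "P' \<noteq> Q" "P' \<noteq> R" "R \<noteq> Q'"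
     "P' \<noteq> Q'" "P' \<noteq> R'" "Q' \<noteq> R'"
    using d lt pt_nofix[of n P] pt_nofix[of n Q] pt_nofix[of n R] n unfolding P'_def Q'_def R'_def by auto
  note dd' = dd dd[symmetric]
  have Hs: "\<And>i. i < 2*n \<Longrightarrow> Tr (2*n) (uv (2*n) i) \<in> HH n" by (rule Tr_uv_H[OF n])
  define v0 where "v0 = uv (2*n) Q' + uv (2*n) R'"
  define v1 where "v1 = Tr (2*n) (uv (2*n) Q) *\<^sub>v v0"
  define v2 where "v2 = Tr (2*n) (uv (2*n) P + uv (2*n) Q) *\<^sub>v v1"
  define v3 where "v3 = Tr (2*n) (uv (2*n) R) *\<^sub>v v2"
  define v4 where "v4 = Tr (2*n) (uv (2*n) Q' + uv (2*n) R') *\<^sub>v v3"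
  have c: "v0 \<in> carrier_vec (2*n)" "v1 \<in> carrier_vec (2*n)" "v2 \<in> carrier_vec (2*n)" "v3 \<in> carrier_vec (2*n)"
    unfolding v0_def v1_def v2_def v3_def by auto
  have H0: "Tr (2*n) v0 \<in> HH n" using H2 unfolding v0_def Q'_def R'_def .
  have HA: "Tr (2*n) v1 \<in> HH n" unfolding v1_def by (rule R1[OF n Hs[OF lt(2)] H0]) (auto simp: c)
  have HB: "Tr (2*n) v2 \<in> HH n" unfolding v2_def by (rule R1[OF n H1 HA]) (auto simp: c)
  have HC: "Tr (2*n) v3 \<in> HH n" unfolding v3_def by (rule R1[OF n Hs[OF lt(3)] HB]) (auto simp: c)
  have HD: "Tr (2*n) v4 \<in> HH n" unfolding v4_def by (rule R1[OF n H0[unfolded v0_def] HC]) (auto simp: c)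
  have e1: "v1 = v0 + uv (2*n) Q"
    unfolding v1_def using c lt lt' dd' pp by (simp add: Tr_uv_act v0_def) (simp add: uv_def)
  have e2: "v2 = v1 + (uv (2*n) P + uv (2*n) Q)"
    unfolding v2_def using c lt lt' dd' pp by (simp add: Tr_uv2_act e1 v0_def) (simp add: uv_def)
  have e3: "v3 = v2 + uv (2*n) R"
    unfolding v3_def using c lt lt' dd' pp by (simp add: Tr_uv_act e2 e1 v0_def) (simp add: uv_def)
  have e4: "v4 = v3 + (uv (2*n) Q' + uv (2*n) R')"
    unfolding v4_def using c lt lt' dd' pp by (simp add: Tr_uv2_act e3 e2 e1 v0_def) (simp add: uv_def)
  have "v4 = uv (2*n) P + uv (2*n) R"
    unfolding e4 e3 e2 e1 v0_def using lt lt' dd'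
    by (intro eq_vecI) (auto simp: uv_def)
  thus ?thesis using HD by simp
qed


lemma Em: assumes n: "n > 2"
  shows "1 \<le> m \<Longrightarrow> m \<le> n - 1 \<Longrightarrow> Tr (2*n) (ee n s + ee n (s + m)) \<in> HH n"
proof (induction m)
  case 0 thus ?case by simp
next
  case (Suc m)
  show ?case
  proof (cases "m = 0")
    case True thus ?thesis using Tr_adj[OF n, of s] by simp
  next
    case False
    hence m: "1 \<le> m" "m + 1 \<le> n - 1" using Suc.prems by auto
    have IH: "Tr (2*n) (ee n s + ee n (s + m)) \<in> HH n" using Suc.IH m by auto
    define P Q R where "P = cpos n s" and "Q = cpos n (s + m)" and "R = cpos n (s + m + 1)"
    have lt: "P < 2*n" "Q < 2*n" "R < 2*n" unfolding P_def Q_def R_def using n by (auto simp: cpos_lt)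
    have ne: "\<And>a k. 0 < k \<Longrightarrow> k < 2*n \<Longrightarrow> cpos n a \<noteq> cpos n (a + k)"
      using cpos_shift_ne[OF n] by metis
    have pQ: "2*n - 1 - Q = cpos n (s + m + n)" unfolding Q_def by (rule cpos_partner[OF n])
    have pR: "2*n - 1 - R = cpos n (s + m + 1 + n)" unfolding R_def by (rule cpos_partner[OF n])
    have d: "P \<noteq> Q" "P \<noteq> R" "Q \<noteq> R" "P \<noteq> 2*n-1-Q" "P \<noteq> 2*n-1-R" "Q \<noteq> 2*n-1-R"
    proof -
      show "P \<noteq> Q" unfolding P_def Q_def using ne[of m s] m n by auto
      show "P \<noteq> R" unfolding P_def R_def using ne[of "m+1" s] m n by (auto simp: add.assoc)
      show "Q \<noteq> R" unfolding Q_def R_def using ne[of 1 "s+m"] m n by auto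
      show "P \<noteq> 2*n-1-Q" unfolding pQ P_def using ne[of "m+n" s] m n by (auto simp: add.assoc)
      show "P \<noteq> 2*n-1-R" unfolding pR P_def using ne[of "m+1+n" s] m n by (auto simp: add.assoc)
      show "Q \<noteq> 2*n-1-R" unfolding pR Q_def using ne[of "1+n" "s+m"] m n by (auto simp: add.assoc)
    qed
    have H1: "Tr (2*n) (uv (2*n) P + uv (2*n) Q) \<in> HH n" using IH unfolding P_def Q_def ee_def .
    have H2: "Tr (2*n) (uv (2*n) (2*n-1-Q) + uv (2*n) (2*n-1-R)) \<in> HH n"
      using Tr_adj[OF n, of "s + m + n"] unfolding pQ pR ee_def by simp
    have "Tr (2*n) (uv (2*n) P + uv (2*n) R) \<in> HH n" by (rule ext3[OF n lt d H1 H2])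
    thus ?thesis unfolding P_def R_def ee_def by simp
  qed
qed

lemma pairs: assumes n: "n > 2" and ab: "a < 2*n" "b < 2*n" "a \<noteq> b" "b \<noteq> 2*n - 1 - a"
  shows "Tr (2*n) (uv (2*n) a + uv (2*n) b) \<in> HH n"
proof -
  obtain s0 t0 where st0: "cpos n s0 = a" "cpos n t0 = b" using cpos_surj[OF n] ab by metis
  define s t where "s = s0 mod (2*n)" and "t = t0 mod (2*n)"
  have st: "cpos n s = a" "cpos n t = b" "s < 2*n" "t < 2*n" using st0 n unfolding s_def t_def by (auto simp: cpos_mod)
  have comm: "uv (2*n) b + uv (2*n) a = uv (2*n) a + uv (2*n) b"
    by (rule comm_add_vec[of _ "2*n"]) auto
  have per: "\<And>j. ee n (j + 2*n) = ee n j" by (simp add: ee_def cpos_per)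
  have stne: "s \<noteq> t" using st ab by auto
  show ?thesis
  proof (cases "s < t")
    case True
    define m where "m = t - s"
    have tm: "t = s + m" unfolding m_def using True by simp
    have mn: "m \<noteq> n"
    proof
      assume "m = n"
      hence "b = cpos n (s + n)" using st tm by simp
      also have "\<dots> = 2*n - 1 - a" using cpos_partner[OF n, of s] st by simp
      finally show False using ab by simp
    qed
    show ?thesis
    proof (cases "m < n")
      case True
      have "1 \<le> m" "m \<le> n - 1" using True stne tm by auto
      from Em[OF n this, of s] show ?thesis using st tm unfolding ee_def by simp
    next
      case False
      define m' where "m' = 2*n - m"
      have "1 \<le> m'" "m' \<le> n - 1" using False mn st tm unfolding m'_def by auto
      from Em[OF n this, of t] have "Tr (2*n) (ee n t + ee n (t + m')) \<in> HH n" .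
      moreover have "t + m' = s + 2*n" using st tm False unfolding m'_def by auto
      ultimately show ?thesis using st per comm unfolding ee_def by (metis)
    qed
  next
    case False
    hence tl: "t < s" using stne by simp
    define m where "m = s - t"
    have tm: "s = t + m" unfolding m_def using tl by simp
    have mn: "m \<noteq> n"
    proof
      assume "m = n"
      hence "a = cpos n (t + n)" using st tm by simp
      also have "\<dots> = 2*n - 1 - b" using cpos_partner[OF n, of t] st by simp
      finally show False using ab by auto
    qed
    show ?thesis
    proof (cases "m < n")
      case True
      have "1 \<le> m" "m \<le> n - 1" using True stne tm by auto
      from Em[OF n this, of t] show ?thesis using st tm comm unfolding ee_def by simp
    next
      case False
      define m' where "m' = 2*n - m"
      have "1 \<le> m'" "m' \<le> n - 1" using False mn st tm unfolding m'_def by auto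
      from Em[OF n this, of s] have "Tr (2*n) (ee n s + ee n (s + m')) \<in> HH n" .
      moreover have "s + m' = t + 2*n" using st tm False unfolding m'_def by auto
      ultimately show ?thesis using st per unfolding ee_def by (metis)
    qed
  qed
qed


definition supp :: "nat \<Rightarrow> bit vec \<Rightarrow> nat set" where
  "supp n v = {i. i < 2*n \<and> v$i = 1}"

lemma supp_fin: "finite (supp n v)" unfolding supp_def by auto

lemma Tr_invol: "u \<in> carrier_vec (2*n) \<Longrightarrow> x \<in> carrier_vec (2*n) \<Longrightarrow> Tr (2*n) u *\<^sub>v (Tr (2*n) u *\<^sub>v x) = x"
  using Tr_sq[of u n] by (metis Tr_carrier assoc_sq one_mult_mat_vec)

lemma caseA: assumes n: "n > 2" and v: "v \<in> carrier_vec (2*n)" and i: "i < 2*n" "v$i = 1" "v$(2*n-1-i) = 1"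
  and IH: "\<And>w. card (supp n w) < card (supp n v) \<Longrightarrow> w \<in> carrier_vec (2*n) \<Longrightarrow> Tr (2*n) w \<in> HH n"
  shows "Tr (2*n) v \<in> HH n"
proof -
  define v' where "v' = Tr (2*n) (uv (2*n) i) *\<^sub>v v"
  have v'c: "v' \<in> carrier_vec (2*n)" unfolding v'_def using v by simp
  have e: "v' = v + uv (2*n) i" unfolding v'_def using v i by (simp add: Tr_uv_act)
  have s: "supp n v' = supp n v - {i}"
    unfolding supp_def e using v i by (auto simp: uv_def split: if_splits)
  have "card (supp n v') < card (supp n v)"
    unfolding s using i supp_fin[of n v] by (intro card_Diff1_less) (auto simp: supp_def)
  hence T: "Tr (2*n) v' \<in> HH n" using IH v'c by blast
  have "Tr (2*n) (Tr (2*n) (uv (2*n) i) *\<^sub>v v') \<in> HH n"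
    by (rule R1[OF n Tr_uv_H[OF n i(1)] T]) (auto simp: v'c)
  moreover have "Tr (2*n) (uv (2*n) i) *\<^sub>v v' = v" unfolding v'_def using v by (simp add: Tr_invol)
  ultimately show ?thesis by simp
qed

lemma caseB: assumes n: "n > 2" and v: "v \<in> carrier_vec (2*n)" and ij: "i < 2*n" "j < 2*n" "i \<noteq> j"
  and vi: "v$i = 1" "v$j = 1" "v$(2*n-1-i) = 0" "v$(2*n-1-j) = 0"
  and IH: "\<And>w. card (supp n w) < card (supp n v) \<Longrightarrow> w \<in> carrier_vec (2*n) \<Longrightarrow> Tr (2*n) w \<in> HH n"
  shows "Tr (2*n) v \<in> HH n"
proof -
  define p where "p = 2*n-1-i"
  have pl: "p < 2*n" "2*n-1-p = i" unfolding p_def using ij by auto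
  have pne: "p \<noteq> i" "p \<noteq> j" using pt_nofix[of n i] n vi unfolding p_def by auto
  define y where "y = uv (2*n) p + uv (2*n) j"
  have yc: "y \<in> carrier_vec (2*n)" unfolding y_def by simp
  have Ty: "Tr (2*n) y \<in> HH n" unfolding y_def
    by (rule pairs[OF n pl(1) ij(2) pne(2)]) (use pl(2) ij in auto)
  define v1 where "v1 = Tr (2*n) y *\<^sub>v v"
  define v2 where "v2 = Tr (2*n) (uv (2*n) i) *\<^sub>v v1"
  have v1c: "v1 \<in> carrier_vec (2*n)" and v2c: "v2 \<in> carrier_vec (2*n)" unfolding v1_def v2_def using v yc by auto
  have e1: "v1 = v + y" unfolding v1_def y_def using v ij vi pl by (simp add: Tr_uv2_act)
  have e2: "v2 = v + y + uv (2*n) i" unfolding v2_def e1 y_def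
    using v ij vi pl pne p_def by (simp add: Tr_uv_act) (simp add: uv_def)
  have comp: "\<And>k. k < 2*n \<Longrightarrow> v2$k = v$k + ((if k = p then 1 else 0) + (if k = j then 1 else 0)) + (if k = i then 1 else 0)"
    unfolding e2 y_def using v pl ij by (simp add: uv_def)
  have vp: "v$p = 0" using vi unfolding p_def by simp
  have s: "supp n v2 = insert p (supp n v - {i, j})"
  proof (rule Set.set_eqI)
    fix k
    show "k \<in> supp n v2 \<longleftrightarrow> k \<in> insert p (supp n v - {i, j})"
    proof (cases "k < 2*n")
      case False thus ?thesis using pl unfolding supp_def by auto
    next
      case True
      show ?thesis
      proof (cases "k = i")
        case True thus ?thesis using comp[of k] ij \<open>k < 2*n\<close> vi pne unfolding supp_def by auto
      next
        case ki: False
        show ?thesis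
        proof (cases "k = j")
          case True thus ?thesis using comp[of k] ij \<open>k < 2*n\<close> vi pne ki unfolding supp_def by auto
        next
          case kj: False
          show ?thesis
          proof (cases "k = p")
            case True thus ?thesis using comp[of k] ij \<open>k < 2*n\<close> vp pne ki kj unfolding supp_def by auto
          next
            case False thus ?thesis using comp[of k] ij \<open>k < 2*n\<close> ki kj unfolding supp_def by auto
          qed
        qed
      qed
    qed
  qed
  have "card (supp n v - {i, j}) = card (supp n v) - 2"
    using ij vi supp_fin[of n v] by (subst card_Diff_subset) (auto simp: supp_def)
  moreover have "card (supp n v) \<ge> 2"
  proof -
    have "{i, j} \<subseteq> supp n v" using ij vi by (auto simp: supp_def)
    from card_mono[OF supp_fin this] show ?thesis using ij by simp
  qed
  moreover have "card (supp n v2) \<le> card (supp n v - {i, j}) + 1"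
    unfolding s using supp_fin[of n v] by (simp add: card_insert_if)
  ultimately have "card (supp n v2) < card (supp n v)" by linarith
  hence T2: "Tr (2*n) v2 \<in> HH n" using IH v2c by blast
  have T1: "Tr (2*n) (Tr (2*n) (uv (2*n) i) *\<^sub>v v2) \<in> HH n"
    by (rule R1[OF n Tr_uv_H[OF n ij(1)] T2]) (auto simp: v2c)
  have "Tr (2*n) (uv (2*n) i) *\<^sub>v v2 = v1" unfolding v2_def using v1c by (simp add: Tr_invol)
  hence T1': "Tr (2*n) v1 \<in> HH n" using T1 by simp
  have "Tr (2*n) (Tr (2*n) y *\<^sub>v v1) \<in> HH n" by (rule R1[OF n Ty T1' yc v1c])
  moreover have "Tr (2*n) y *\<^sub>v v1 = v" unfolding v1_def using v yc by (simp add: Tr_invol)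
  ultimately show ?thesis by simp
qed

lemma all_Tr: assumes n: "n > 2" shows "v \<in> carrier_vec (2*n) \<Longrightarrow> Tr (2*n) v \<in> HH n"
proof (induction "card (supp n v)" arbitrary: v rule: less_induct)
  case less
  have IH: "\<And>w. card (supp n w) < card (supp n v) \<Longrightarrow> w \<in> carrier_vec (2*n) \<Longrightarrow> Tr (2*n) w \<in> HH n"
    using less by blast
  have v: "v \<in> carrier_vec (2*n)" by fact
  show ?case
  proof (cases "supp n v = {}")
    case True
    have "v = 0\<^sub>v (2*n)" using True v by (intro eq_vecI) (auto simp: supp_def)
    thus ?thesis by (simp add: Tr_zero gen_grp.one)
  next
    case False
    then obtain i where i: "i < 2*n" "v$i = 1" unfolding supp_def by auto
    show ?thesis
    proof (cases "v$(2*n-1-i) = 1")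
      case True thus ?thesis using caseA[OF n v i True IH] by simp
    next
      case Fi: False
      show ?thesis
      proof (cases "supp n v = {i}")
        case True
        have z: "\<And>k. k < 2*n \<Longrightarrow> k \<noteq> i \<Longrightarrow> v$k = 0"
        proof -
          fix k assume k: "k < 2*n" "k \<noteq> i"
          hence "k \<notin> supp n v" using True by auto
          thus "v$k = 0" using k unfolding supp_def by simp
        qed
        have "v = uv (2*n) i" using z v i unfolding uv_def by (intro eq_vecI) auto
        thus ?thesis using Tr_uv_H[OF n i(1)] by simp
      next
        case False
        then obtain j where j: "j < 2*n" "v$j = 1" "j \<noteq> i" using i unfolding supp_def by auto
        show ?thesis
        proof (cases "v$(2*n-1-j) = 1")
          case True thus ?thesis using caseA[OF n v j(1,2) True IH] by simp
        next
          case False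
          thus ?thesis using caseB[OF n v i(1) j(1) j(3)[symmetric] i(2) j(2) _ _ IH] Fi by simp
        qed
      qed
    qed
  qed
qed


definition fixk :: "nat \<Rightarrow> nat \<Rightarrow> bit mat \<Rightarrow> bool" where
  "fixk n k X \<longleftrightarrow> (\<forall>i<k. X *\<^sub>v uv (2*n) i = uv (2*n) i \<and> X *\<^sub>v uv (2*n) (2*n-1-i) = uv (2*n) (2*n-1-i))"

definition Wk :: "nat \<Rightarrow> nat \<Rightarrow> bit vec \<Rightarrow> bool" where
  "Wk n k w \<longleftrightarrow> w \<in> carrier_vec (2*n) \<and> (\<forall>i<k. w$i = 0 \<and> w$(2*n-1-i) = 0)"

lemma fixk_Suc: "fixk n (Suc k) X \<longleftrightarrow> fixk n k X \<and> X *\<^sub>v uv (2*n) k = uv (2*n) k \<and> X *\<^sub>v uv (2*n) (2*n-1-k) = uv (2*n) (2*n-1-k)"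
  unfolding fixk_def using less_Suc_eq by auto

lemma Wk_add: "k \<le> n \<Longrightarrow> Wk n k a \<Longrightarrow> Wk n k b \<Longrightarrow> Wk n k (a + b)"
  unfolding Wk_def by (auto simp: less_imp_diff_less)

lemma Wk_uv: assumes "k \<le> j" "j \<le> 2*n-1-k" "j < 2*n" shows "Wk n k (uv (2*n) j)"
  using assms unfolding Wk_def uv_def by auto

lemma Bf_uv1: "i < 2*n \<Longrightarrow> Bf (2*n) (uv (2*n) i) y = y $ (2*n-1-i)"
  by (simp add: uv_def Bf_unit1)
lemma Bf_uv2: "x \<in> carrier_vec (2*n) \<Longrightarrow> j < 2*n \<Longrightarrow> Bf (2*n) x (uv (2*n) j) = x $ (2*n-1-j)"
  by (simp add: uv_def Bf_unit2)

lemma mat_one_by_units: fixes X :: "bit mat" assumes X: "X \<in> carrier_mat d d"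
  and u: "\<And>j. j < d \<Longrightarrow> X *\<^sub>v unit_vec d j = unit_vec d j"
  shows "X = 1\<^sub>m d"
proof (rule eq_matI)
  fix i j assume "i < dim_row (1\<^sub>m d :: bit mat)" "j < dim_col (1\<^sub>m d :: bit mat)"
  hence ij: "i < d" "j < d" by auto
  have dX: "dim_row X = d" "dim_col X = d" using X by auto
  have "X $$ (i,j) = (X *\<^sub>v unit_vec d j) $ i" using ij dX by (simp add: scalar_prod_right_unit)
  also have "\<dots> = (1\<^sub>m d :: bit mat) $$ (i,j)" using u[OF ij(2)] ij by simp
  finally show "X $$ (i,j) = (1\<^sub>m d :: bit mat) $$ (i,j)" .
qed (insert X, auto)

lemma fixk_all: assumes X: "X \<in> carrier_mat (2*n) (2*n)" and f: "fixk n n X" shows "X = 1\<^sub>m (2*n)"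
proof (rule mat_one_by_units[OF X])
  fix j assume j: "j < 2*n"
  show "X *\<^sub>v unit_vec (2*n) j = unit_vec (2*n) j"
  proof (cases "j < n")
    case True thus ?thesis using f unfolding fixk_def uv_def by auto
  next
    case False
    hence "2*n-1-j < n" "2*n-1-(2*n-1-j) = j" using j by auto
    thus ?thesis using f unfolding fixk_def uv_def by metis
  qed
qed

lemma TrX_act: "X \<in> carrier_mat (2*n) (2*n) \<Longrightarrow> w \<in> carrier_vec (2*n) \<Longrightarrow> x \<in> carrier_vec (2*n) \<Longrightarrow>
  (Tr (2*n) w * X) *\<^sub>v x = Tr (2*n) w *\<^sub>v (X *\<^sub>v x)"
  by (simp add: assoc_sq[of _ "2*n"])

lemma Tr_fix: "x \<in> carrier_vec (2*n) \<Longrightarrow> w \<in> carrier_vec (2*n) \<Longrightarrow> Bf (2*n) x w = 0 \<Longrightarrow> Tr (2*n) w *\<^sub>v x = x"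
  by (simp add: Tr_act) (intro eq_vecI, auto)

lemma Tr_move: assumes u: "u \<in> carrier_vec (2*n)" and z: "z \<in> carrier_vec (2*n)" and b: "Bf (2*n) u z = 1"
  shows "Tr (2*n) (u + z) *\<^sub>v u = z"
proof -
  have "Bf (2*n) u (u + z) = 1" using u z b Bf_self[OF u] by (simp add: Bf_add2)
  hence "Tr (2*n) (u + z) *\<^sub>v u = u + (u + z)" using u z by (simp add: Tr_act)
  also have "\<dots> = z" using u z by (intro eq_vecI) (auto simp: add.assoc[symmetric])
  finally show ?thesis .
qed

lemma fixk_Tr: assumes kn: "k \<le> n" and X: "X \<in> carrier_mat (2*n) (2*n)" and f: "fixk n k X" and w: "Wk n k w"
  shows "fixk n k (Tr (2*n) w * X)"
  unfolding fixk_def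
proof (intro allI impI conjI)
  fix i assume i: "i < k"
  have wc: "w \<in> carrier_vec (2*n)" using w unfolding Wk_def by auto
  have il: "i < 2*n" "2*n-1-i < 2*n" "2*n-1-(2*n-1-i) = i" using i kn by auto
  show "(Tr (2*n) w * X) *\<^sub>v uv (2*n) i = uv (2*n) i"
    using X wc f i w il by (simp add: TrX_act fixk_def Tr_fix Bf_uv1 Wk_def)
  show "(Tr (2*n) w * X) *\<^sub>v uv (2*n) (2*n-1-i) = uv (2*n) (2*n-1-i)"
    using X wc f i w il by (simp add: TrX_act fixk_def Tr_fix Bf_uv1 Wk_def)
qed

lemma SpB_c: "SpB d X \<Longrightarrow> X \<in> carrier_mat d d" unfolding SpB_def by auto
lemma SpB_Bf: "SpB d X \<Longrightarrow> x \<in> carrier_vec d \<Longrightarrow> y \<in> carrier_vec d \<Longrightarrow> Bf d (X *\<^sub>v x) (X *\<^sub>v y) = Bf d x y"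
  unfolding SpB_def by auto

lemma inWk: assumes n: "n > 2" and k: "k < n" and S: "SpB (2*n) X" and f: "fixk n k X"
  and j: "j = k \<or> j = 2*n-1-k"
  shows "Wk n k (X *\<^sub>v uv (2*n) j)"
  unfolding Wk_def
proof (intro conjI allI impI)
  have Xc: "X \<in> carrier_mat (2*n) (2*n)" by (rule SpB_c[OF S])
  have jl: "j < 2*n" using j k by auto
  show c: "X *\<^sub>v uv (2*n) j \<in> carrier_vec (2*n)" using Xc by simp
  fix i assume i: "i < k"
  have il: "i < 2*n" "2*n-1-i < 2*n" "2*n-1-(2*n-1-i) = i" using i k by auto
  have "(X *\<^sub>v uv (2*n) j) $ i = Bf (2*n) (X *\<^sub>v uv (2*n) j) (uv (2*n) (2*n-1-i))"
    using Bf_uv2[OF c il(2)] il(3) by simp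
  also have "\<dots> = Bf (2*n) (X *\<^sub>v uv (2*n) j) (X *\<^sub>v uv (2*n) (2*n-1-i))" using f i unfolding fixk_def by simp
  also have "\<dots> = Bf (2*n) (uv (2*n) j) (uv (2*n) (2*n-1-i))" using SpB_Bf[OF S] by simp
  also have "\<dots> = 0"
  proof -
    have "2*n-1-j \<noteq> 2*n-1-i" using j i k by auto
    thus ?thesis using jl il by (simp add: Bf_uv1) (simp add: uv_def)
  qed
  finally show "(X *\<^sub>v uv (2*n) j) $ i = 0" .
  have "(X *\<^sub>v uv (2*n) j) $ (2*n-1-i) = Bf (2*n) (X *\<^sub>v uv (2*n) j) (uv (2*n) i)"
    using Bf_uv2[OF c il(1)] by simp
  also have "\<dots> = Bf (2*n) (X *\<^sub>v uv (2*n) j) (X *\<^sub>v uv (2*n) i)" using f i unfolding fixk_def by simp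
  also have "\<dots> = Bf (2*n) (uv (2*n) j) (uv (2*n) i)" using SpB_Bf[OF S] by simp
  also have "\<dots> = 0"
  proof -
    have "2*n-1-j \<noteq> i" using j i k by auto
    thus ?thesis using jl il by (simp add: Bf_uv1) (simp add: uv_def)
  qed
  finally show "(X *\<^sub>v uv (2*n) j) $ (2*n-1-i) = 0" .
qed

lemma Bkk: assumes S: "SpB (2*n) X" and k: "k < 2*n"
  shows "Bf (2*n) (X *\<^sub>v uv (2*n) k) (X *\<^sub>v uv (2*n) (2*n-1-k)) = 1"
  using SpB_Bf[OF S] k by (simp add: Bf_uv1) (simp add: uv_def)

lemma S2a: assumes n: "n > 2" and k: "k < n" and S: "SpB (2*n) X" and f: "fixk n k X"
  and ek: "X *\<^sub>v uv (2*n) k = uv (2*n) k" and vk: "(X *\<^sub>v uv (2*n) (2*n-1-k)) $ k = 1"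
  and IH: "\<And>Y. SpB (2*n) Y \<Longrightarrow> fixk n (Suc k) Y \<Longrightarrow> Y \<in> HH n"
  shows "X \<in> HH n"
proof -
  define p where "p = 2*n-1-k"
  have pl: "p < 2*n" "2*n-1-p = k" "k < 2*n" "p \<noteq> k" using k unfolding p_def by auto
  have Xc: "X \<in> carrier_mat (2*n) (2*n)" by (rule SpB_c[OF S])
  define v where "v = X *\<^sub>v uv (2*n) p"
  have vc: "v \<in> carrier_vec (2*n)" unfolding v_def using Xc by simp
  have vp: "v $ p = 1" using Bkk[OF S pl(3)] ek unfolding v_def p_def[symmetric]
    by (simp add: Bf_uv1 pl) (simp add: p_def)
  have vk': "v $ k = 1" using vk unfolding v_def p_def .
  define y where "y = v + uv (2*n) p"
  have yc: "y \<in> carrier_vec (2*n)" unfolding y_def using vc by simp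
  have yW: "Wk n k y" unfolding y_def v_def p_def
    by (rule Wk_add) (use k inWk[OF n k S f] in \<open>auto intro!: Wk_uv\<close>)
  define Y where "Y = Tr (2*n) y * X"
  have SY: "SpB (2*n) Y" unfolding Y_def by (rule SpB_mult[OF Tr_SpB[OF yc] S])
  have fY: "fixk n k Y" unfolding Y_def by (rule fixk_Tr[OF _ Xc f yW]) (use k in auto)
  have b0: "Bf (2*n) (uv (2*n) k) y = 0"
    using pl vc vp unfolding y_def by (simp add: Bf_uv1) (simp add: p_def[symmetric] uv_def)
  have Y1: "Y *\<^sub>v uv (2*n) k = uv (2*n) k"
    unfolding Y_def using Xc yc ek by (simp add: TrX_act Tr_fix b0)
  have "Bf (2*n) v (uv (2*n) p) = 1" using vc pl vk' by (simp add: Bf_uv2)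
  hence "Tr (2*n) y *\<^sub>v v = uv (2*n) p" unfolding y_def using vc by (intro Tr_move) auto
  hence Y2: "Y *\<^sub>v uv (2*n) p = uv (2*n) p" unfolding Y_def v_def using Xc yc by (simp add: TrX_act)
  have "Y \<in> HH n" using IH[OF SY] fY Y1 Y2 unfolding fixk_Suc p_def by auto
  thus ?thesis unfolding Y_def using H_back[OF n all_Tr[OF n yc] yc Xc] by blast
qed

lemma S2: assumes n: "n > 2" and k: "k < n" and S: "SpB (2*n) X" and f: "fixk n k X"
  and ek: "X *\<^sub>v uv (2*n) k = uv (2*n) k"
  and IH: "\<And>Y. SpB (2*n) Y \<Longrightarrow> fixk n (Suc k) Y \<Longrightarrow> Y \<in> HH n"
  shows "X \<in> HH n"
proof (cases "(X *\<^sub>v uv (2*n) (2*n-1-k)) $ k = 1")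
  case True thus ?thesis using S2a[OF n k S f ek _ IH] by simp
next
  case False
  define p where "p = 2*n-1-k"
  have pl: "p < 2*n" "2*n-1-p = k" "k < 2*n" "p \<noteq> k" using k unfolding p_def by auto
  have Xc: "X \<in> carrier_mat (2*n) (2*n)" by (rule SpB_c[OF S])
  define v where "v = X *\<^sub>v uv (2*n) p"
  have vc: "v \<in> carrier_vec (2*n)" unfolding v_def using Xc by simp
  have vp: "v $ p = 1" using Bkk[OF S pl(3)] ek unfolding v_def p_def[symmetric]
    by (simp add: Bf_uv1 pl) (simp add: p_def)
  have vk: "v $ k = 0" using False unfolding v_def p_def by simp
  define Y where "Y = Tr (2*n) (uv (2*n) k) * X"
  have ukc: "uv (2*n) k \<in> carrier_vec (2*n)" by simp
  have SY: "SpB (2*n) Y" unfolding Y_def by (rule SpB_mult[OF Tr_SpB[OF ukc] S])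
  have fY: "fixk n k Y" unfolding Y_def
    by (rule fixk_Tr[OF _ Xc f]) (use k pl in \<open>auto intro!: Wk_uv\<close>)
  have b0: "Bf (2*n) (uv (2*n) k) (uv (2*n) k) = 0"
    using pl by (simp add: Bf_uv1) (simp add: p_def[symmetric] uv_def)
  have Y1: "Y *\<^sub>v uv (2*n) k = uv (2*n) k"
    unfolding Y_def using Xc ek by (simp add: TrX_act Tr_fix b0)
  have "Tr (2*n) (uv (2*n) k) *\<^sub>v v = v + v$p \<cdot>\<^sub>v uv (2*n) k"
    using Tr_uv_act[OF vc pl(3)] unfolding p_def by simp
  also have "\<dots> = v + uv (2*n) k" using vp vc by (intro eq_vecI) auto
  finally have Y2: "Y *\<^sub>v uv (2*n) p = v + uv (2*n) k"
    unfolding Y_def v_def using Xc by (simp add: TrX_act)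
  have Y3: "(Y *\<^sub>v uv (2*n) (2*n-1-k)) $ k = 1"
    using Y2 vc vk pl unfolding p_def[symmetric] by (simp add: uv_def)
  have "Y \<in> HH n" by (rule S2a[OF n k SY fY Y1 Y3 IH])
  thus ?thesis unfolding Y_def using H_back[OF n all_Tr[OF n ukc] ukc Xc] by blast
qed

lemma Bf_zero1: "Bf d (0\<^sub>v d) y = 0" unfolding Bf_def by simp

lemma S1: assumes n: "n > 2" and k: "k < n" and S: "SpB (2*n) X" and f: "fixk n k X"
  and IH: "\<And>Y. SpB (2*n) Y \<Longrightarrow> fixk n (Suc k) Y \<Longrightarrow> Y \<in> HH n"
  shows "X \<in> HH n"
proof -
  define p where "p = 2*n-1-k"
  have pl: "p < 2*n" "2*n-1-p = k" "k < 2*n" "p \<noteq> k" "k \<le> p" using k unfolding p_def by auto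
  have Xc: "X \<in> carrier_mat (2*n) (2*n)" by (rule SpB_c[OF S])
  define u where "u = X *\<^sub>v uv (2*n) k"
  define e where "e = uv (2*n) k"
  have uc: "u \<in> carrier_vec (2*n)" and ec: "e \<in> carrier_vec (2*n)" unfolding u_def e_def using Xc by auto
  have uW: "Wk n k u" unfolding u_def using inWk[OF n k S f] by simp
  have eW: "Wk n k e" unfolding e_def by (rule Wk_uv) (use pl in auto)
  have B1: "Bf (2*n) u (X *\<^sub>v uv (2*n) p) = 1" unfolding u_def p_def using Bkk[OF S pl(3)] .
  have u0: "u \<noteq> 0\<^sub>v (2*n)"
  proof
    assume "u = 0\<^sub>v (2*n)"
    thus False using B1 Bf_zero1[of "2*n"] by simp
  qed
  have kn: "k \<le> n" using k by simp
  have bk: "\<And>w Y. w \<in> carrier_vec (2*n) \<Longrightarrow> Y \<in> carrier_mat (2*n) (2*n) \<Longrightarrow> Tr (2*n) w * Y \<in> HH n \<Longrightarrow> Y \<in> HH n"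
    using H_back[OF n all_Tr[OF n]] by blast
  have stp: "\<And>w Y. Wk n k w \<Longrightarrow> SpB (2*n) Y \<Longrightarrow> fixk n k Y \<Longrightarrow>
      SpB (2*n) (Tr (2*n) w * Y) \<and> fixk n k (Tr (2*n) w * Y)"
  proof -
    fix w Y assume w: "Wk n k w" and SY: "SpB (2*n) Y" and fY: "fixk n k Y"
    have wc: "w \<in> carrier_vec (2*n)" using w unfolding Wk_def by auto
    show "SpB (2*n) (Tr (2*n) w * Y) \<and> fixk n k (Tr (2*n) w * Y)"
      using SpB_mult[OF Tr_SpB[OF wc] SY] fixk_Tr[OF kn SpB_c[OF SY] fY w] by simp
  qed
  show ?thesis
  proof (cases "u = e")
    case True thus ?thesis using S2[OF n k S f _ IH] unfolding u_def e_def by simp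
  next
    case une: False
    show ?thesis
    proof (cases "u $ p = 1")
      case True
      have "Bf (2*n) u e = 1" using True uc pl unfolding e_def by (simp add: Bf_uv2 p_def)
      hence mv: "Tr (2*n) (u + e) *\<^sub>v u = e" using uc ec by (intro Tr_move)
      have W: "Wk n k (u + e)" by (rule Wk_add[OF kn uW eW])
      have uec: "u + e \<in> carrier_vec (2*n)" using uc ec by simp
      define Y where "Y = Tr (2*n) (u + e) * X"
      have SfY: "SpB (2*n) Y" "fixk n k Y" using stp[OF W S f] unfolding Y_def by auto
      have "Y *\<^sub>v uv (2*n) k = Tr (2*n) (u + e) *\<^sub>v u"
        using TrX_act[OF Xc uec, of "uv (2*n) k"] unfolding Y_def u_def by simp
      hence "Y *\<^sub>v uv (2*n) k = uv (2*n) k" using mv unfolding e_def by simp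
      hence "Y \<in> HH n" using S2[OF n k SfY _ IH] by simp
      thus ?thesis using bk[OF uec Xc] unfolding Y_def by simp
    next
      case up: False
      have "\<exists>z. Wk n k z \<and> Bf (2*n) u z = 1 \<and> Bf (2*n) e z = 1"
      proof (cases "u $ k = 1")
        case True
        have "Wk n k (uv (2*n) p)" by (rule Wk_uv) (use pl in \<open>auto simp: p_def\<close>)
        moreover have "Bf (2*n) u (uv (2*n) p) = 1" using True uc pl by (simp add: Bf_uv2)
        moreover have "Bf (2*n) e (uv (2*n) p) = 1"
        proof -
          have "2*n - Suc k = p" unfolding p_def by simp
          thus ?thesis unfolding e_def using pl by (simp add: Bf_uv1) (simp add: uv_def)
        qed
        ultimately show ?thesis by blast
      next
        case uk: False
        obtain j where j: "j < 2*n" "u $ j = 1"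
        proof -
          have "\<exists>j<2*n. u $ j \<noteq> 0"
          proof (rule ccontr)
            assume "\<not> (\<exists>j<2*n. u $ j \<noteq> 0)"
            hence "u = 0\<^sub>v (2*n)" using uc by (intro eq_vecI) auto
            thus False using u0 by simp
          qed
          thus ?thesis using that by auto
        qed
        have jk: "j \<noteq> k" using j uk by auto
        have jr: "k \<le> j" "j \<le> 2*n-1-k"
        proof -
          show "k \<le> j"
          proof (rule ccontr)
            assume "\<not> k \<le> j" hence "j < k" by simp
            thus False using uW j unfolding Wk_def by auto
          qed
          show "j \<le> 2*n-1-k"
          proof (rule ccontr)
            assume a: "\<not> j \<le> 2*n-1-k"
            hence lt: "2*n-1-j < k" and eq: "2*n-1-(2*n-1-j) = j" using j by auto
            have "u $ (2*n-1-(2*n-1-j)) = 0" using uW lt unfolding Wk_def by blast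
            thus False using eq j by simp
          qed
        qed
        define z where "z = uv (2*n) p + uv (2*n) (2*n-1-j)"
        have jl': "2*n-1-j < 2*n" "2*n-1-(2*n-1-j) = j" "2*n-1-j \<noteq> p" using j jk k unfolding p_def by auto
        have "Wk n k z" unfolding z_def
          by (rule Wk_add[OF kn]; rule Wk_uv) (use pl jr j in \<open>auto simp: p_def\<close>)
        moreover have "Bf (2*n) u z = 1" unfolding z_def using uc pl jl' j uk
          by (simp add: Bf_add2 Bf_uv2)
        moreover have "Bf (2*n) e z = 1" unfolding z_def e_def using pl jl'
          by (simp add: Bf_add2 Bf_uv1 p_def[symmetric]) (simp add: uv_def)
        ultimately show ?thesis by blast
      qed
      then obtain z where zW: "Wk n k z" and uz: "Bf (2*n) u z = 1" and ez: "Bf (2*n) e z = 1" by blast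
      have zc: "z \<in> carrier_vec (2*n)" using zW unfolding Wk_def by auto
      have mv1: "Tr (2*n) (u + z) *\<^sub>v u = z" using uc zc uz by (intro Tr_move)
      have ze: "Bf (2*n) z e = 1" using ez Bf_sym[OF zc ec] by simp
      have mv2: "Tr (2*n) (z + e) *\<^sub>v z = e" using zc ec ze by (intro Tr_move)
      have W1: "Wk n k (u + z)" by (rule Wk_add[OF kn uW zW])
      have W2: "Wk n k (z + e)" by (rule Wk_add[OF kn zW eW])
      have c1: "u + z \<in> carrier_vec (2*n)" and c2: "z + e \<in> carrier_vec (2*n)" using uc zc ec by auto
      define Y1 where "Y1 = Tr (2*n) (u + z) * X"
      define Y2 where "Y2 = Tr (2*n) (z + e) * Y1"
      have S1': "SpB (2*n) Y1" "fixk n k Y1" using stp[OF W1 S f] unfolding Y1_def by auto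
      have S2': "SpB (2*n) Y2" "fixk n k Y2" using stp[OF W2 S1'] unfolding Y2_def by auto
      have Y1c: "Y1 \<in> carrier_mat (2*n) (2*n)" using SpB_c[OF S1'(1)] .
      have a1: "Y1 *\<^sub>v uv (2*n) k = z" unfolding Y1_def using Xc c1 mv1
        by (simp add: TrX_act u_def[symmetric])
      have "Y2 *\<^sub>v uv (2*n) k = Tr (2*n) (z + e) *\<^sub>v (Y1 *\<^sub>v uv (2*n) k)"
        using TrX_act[OF Y1c c2, of "uv (2*n) k"] unfolding Y2_def by simp
      hence "Y2 *\<^sub>v uv (2*n) k = uv (2*n) k" using a1 mv2 unfolding e_def by simp
      hence "Y2 \<in> HH n" using S2[OF n k S2' _ IH] by simp
      hence "Y1 \<in> HH n" using bk[OF c2 Y1c] unfolding Y2_def by simp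
      thus ?thesis using bk[OF c1 Xc] unfolding Y1_def by simp
    qed
  qed
qed

lemma red: assumes n: "n > 2"
  shows "m \<le> n \<Longrightarrow> SpB (2*n) X \<Longrightarrow> fixk n (n - m) X \<Longrightarrow> X \<in> HH n"
proof (induction m arbitrary: X)
  case 0
  have "X = 1\<^sub>m (2*n)" using fixk_all[OF SpB_c[OF 0(2)]] 0(3) by simp
  thus ?case by (simp add: gen_grp.one)
next
  case (Suc m)
  define k where "k = n - Suc m"
  have k: "k < n" "Suc k = n - m" using Suc.prems(1) n unfolding k_def by auto
  have IH: "\<And>Y. SpB (2*n) Y \<Longrightarrow> fixk n (Suc k) Y \<Longrightarrow> Y \<in> HH n"
    using Suc.IH Suc.prems(1) k(2) by auto
  show ?case by (rule S1[OF n k(1) Suc.prems(2) _ IH]) (use Suc.prems(3) k_def in simp)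
qed

theorem main: assumes n: "n > 2" shows "gen_grp (2*n) {gen_a n, w_hat n} = Sp2 n"
proof
  show "gen_grp (2*n) {gen_a n, w_hat n} \<subseteq> Sp2 n" by (rule H_sub[OF n])
  show "Sp2 n \<subseteq> gen_grp (2*n) {gen_a n, w_hat n}"
  proof
    fix X assume "X \<in> Sp2 n"
    hence S: "SpB (2*n) X" using Sp2_iff by blast
    have "fixk n (n - n) X" unfolding fixk_def by simp
    thus "X \<in> gen_grp (2*n) {gen_a n, w_hat n}" using red[OF n _ S] by blast
  qed
qed


theorem mainTheorem6:
  fixes n :: nat
  assumes "n > 2"
  shows "gen_grp (2*n) {gen_a n, w_hat n} = Sp2 n"
  by (rule main[OF assms])

end
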